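(* Let $(\mathcal R,\mu)$ be a finite (nonatomic, separable) measure space, $\Omega\subset\mathcal R$ a $\mu$-measurable set with $\lambda:=\mu(\Omega)>0$, and $X$ a rearrangement-invariant space over $(\mathcal R,\mu)$ generated by an r.-i. function norm $\rho$. Then the subspace $P_\Omega X$, $P_\Omega=\chi_\Omega I$, is a rearrangement-invariant space over $(\Omega,\mu)$ generated by the same function norm $\rho$ restricted to functions supported in $\Omega$, and $X$ and $P_\Omega X$ have the same Boyd indices and the same Zippin indices.
   Context: For an r.-i. space $Y$ over a finite measure space $(S,\mu)$: with its Luxemburg representation $\overline Y$ over $[0,\mu(S)]$ and $(E_xf)(t)=f(xt)$ if $xt\in[0,\mu(S)]$, $0$ otherwise, let $h_Y(x)=\|E_{1/x}\|_{\mathcal B(\overline Y)}$; Boyd indices $\alpha_Y=\lim_{x\to0}\log h_Y(x)/\log x$, $\beta_Y=\lim_{x\to\infty}\log h_Y(x)/\log x$. Fundamental function $\varphi_Y(t)=\|\chi_E\|_Y$ with $\mu(E)=t$, $M_Y(x)=\limsup_{t\to0}\varphi_Y(xt)/\varphi_Y(t)$; Zippin indices $p_Y=\lim_{x\to0}\log M_Y(x)/\log x$, $q_Y=\lim_{x\to\infty}\log M_Y(x)/\log x$. *)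

theory Defs
  imports "HOL-Analysis.Analysis" "HOL-Library.Liminf_Limsup"
begin

definition nonatomic_measure :: "'a measure \<Rightarrow> bool" where
  "nonatomic_measure M \<longleftrightarrow>
     (\<forall>A\<in>sets M. 0 < emeasure M A \<longrightarrow>
        (\<exists>B\<in>sets M. B \<subseteq> A \<and> 0 < emeasure M B \<and> emeasure M B < emeasure M A))"

definition separable_measure :: "'a measure \<Rightarrow> bool" where
  "separable_measure M \<longleftrightarrow>
     (\<exists>D. countable D \<and> D \<subseteq> sets M \<and>
        (\<forall>A\<in>sets M. \<forall>e>0. \<exists>B\<in>D. emeasure M ((A - B) \<union> (B - A)) < ennreal e))"

text \<open>A function norm is a map on nonnegative measurable functions (values in [0,inf]).
  A real function f has norm rho(|f|); the space is {f measurable. rho(|f|) < inf}.\<close>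

definition function_norm :: "'a measure \<Rightarrow> (('a \<Rightarrow> ennreal) \<Rightarrow> ennreal) \<Rightarrow> bool" where
  "function_norm M \<rho> \<longleftrightarrow>
     (\<forall>f\<in>borel_measurable M. \<rho> f = 0 \<longleftrightarrow> (AE x in M. f x = 0)) \<and>
     (\<forall>f\<in>borel_measurable M. \<forall>a::real. a \<ge> 0 \<longrightarrow> \<rho> (\<lambda>x. ennreal a * f x) = ennreal a * \<rho> f) \<and>
     (\<forall>f\<in>borel_measurable M. \<forall>g\<in>borel_measurable M. \<rho> (\<lambda>x. f x + g x) \<le> \<rho> f + \<rho> g) \<and>
     (\<forall>f\<in>borel_measurable M. \<forall>g\<in>borel_measurable M.
        (AE x in M. g x \<le> f x) \<longrightarrow> \<rho> g \<le> \<rho> f) \<and>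
     (\<forall>F f. (\<forall>n. F n \<in> borel_measurable M) \<and> f \<in> borel_measurable M \<and>
        (AE x in M. incseq (\<lambda>n. F n x) \<and> f x = (SUP n. F n x))
        \<longrightarrow> \<rho> f = (SUP n. \<rho> (F n))) \<and>
     (\<forall>E\<in>sets M. emeasure M E < \<infinity> \<longrightarrow> \<rho> (indicator E) < \<infinity>) \<and>
     (\<forall>E\<in>sets M. emeasure M E < \<infinity> \<longrightarrow>
        (\<exists>C::real. \<forall>f\<in>borel_measurable M. (\<integral>\<^sup>+x\<in>E. f x \<partial>M) \<le> ennreal C * \<rho> f))"

definition equimeasurable :: "'a measure \<Rightarrow> ('a \<Rightarrow> ennreal) \<Rightarrow> ('a \<Rightarrow> ennreal) \<Rightarrow> bool" where
  "equimeasurable M f g \<longleftrightarrow>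
     (\<forall>s. emeasure M {x\<in>space M. s < f x} = emeasure M {x\<in>space M. s < g x})"

definition ri_function_norm :: "'a measure \<Rightarrow> (('a \<Rightarrow> ennreal) \<Rightarrow> ennreal) \<Rightarrow> bool" where
  "ri_function_norm M \<rho> \<longleftrightarrow> function_norm M \<rho> \<and>
     (\<forall>f\<in>borel_measurable M. \<forall>g\<in>borel_measurable M. equimeasurable M f g \<longrightarrow> \<rho> f = \<rho> g)"

definition restrict_norm :: "'a set \<Rightarrow> (('a \<Rightarrow> ennreal) \<Rightarrow> ennreal) \<Rightarrow> ('a \<Rightarrow> ennreal) \<Rightarrow> ennreal" where
  "restrict_norm \<Omega> \<rho> g = \<rho> (\<lambda>x. indicator \<Omega> x * g x)"

definition decr_rearr :: "'a measure \<Rightarrow> ('a \<Rightarrow> ennreal) \<Rightarrow> real \<Rightarrow> ennreal" where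
  "decr_rearr M f t = Inf {s. emeasure M {x\<in>space M. s < f x} \<le> ennreal t}"

definition rep_space :: "'a measure \<Rightarrow> real measure" where
  "rep_space M = restrict_space lborel {0 .. measure M (space M)}"

definition is_luxemburg_rep ::
  "'a measure \<Rightarrow> (('a \<Rightarrow> ennreal) \<Rightarrow> ennreal) \<Rightarrow> ((real \<Rightarrow> ennreal) \<Rightarrow> ennreal) \<Rightarrow> bool" where
  "is_luxemburg_rep M \<rho> \<rho>b \<longleftrightarrow> ri_function_norm (rep_space M) \<rho>b \<and>
     (\<forall>f\<in>borel_measurable M. \<rho> f = \<rho>b (decr_rearr M f))"

definition luxemburg_norm :: "'a measure \<Rightarrow> (('a \<Rightarrow> ennreal) \<Rightarrow> ennreal) \<Rightarrow> (real \<Rightarrow> ennreal) \<Rightarrow> ennreal" where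
  "luxemburg_norm M \<rho> = (SOME \<rho>b. is_luxemburg_rep M \<rho> \<rho>b)"

definition dilation :: "real \<Rightarrow> real \<Rightarrow> (real \<Rightarrow> ennreal) \<Rightarrow> real \<Rightarrow> ennreal" where
  "dilation L s g t = (if 0 \<le> s * t \<and> s * t \<le> L then g (s * t) else 0)"

text \<open>h_Y(x) = operator norm of E_{1/x} on the Luxemburg representation space.
  Since |E f| = E |f|, the sup may be taken over nonnegative functions.\<close>
definition boyd_h :: "'a measure \<Rightarrow> (('a \<Rightarrow> ennreal) \<Rightarrow> ennreal) \<Rightarrow> real \<Rightarrow> ennreal" where
  "boyd_h M \<rho> x =
     (SUP g\<in>{g\<in>borel_measurable (rep_space M). luxemburg_norm M \<rho> g \<le> 1}.
        luxemburg_norm M \<rho> (dilation (measure M (space M)) (1 / x) g))"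

definition boyd_lower :: "'a measure \<Rightarrow> (('a \<Rightarrow> ennreal) \<Rightarrow> ennreal) \<Rightarrow> real" where
  "boyd_lower M \<rho> = Lim (at_right 0) (\<lambda>x. ln (enn2real (boyd_h M \<rho> x)) / ln x)"

definition boyd_upper :: "'a measure \<Rightarrow> (('a \<Rightarrow> ennreal) \<Rightarrow> ennreal) \<Rightarrow> real" where
  "boyd_upper M \<rho> = Lim at_top (\<lambda>x. ln (enn2real (boyd_h M \<rho> x)) / ln x)"

text \<open>phi_Y(t) = rho(chi_E) with mu(E) = t (well defined by rearrangement invariance).\<close>
definition fundamental_fn :: "'a measure \<Rightarrow> (('a \<Rightarrow> ennreal) \<Rightarrow> ennreal) \<Rightarrow> real \<Rightarrow> real" where
  "fundamental_fn M \<rho> t =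
     (SOME v. \<exists>E\<in>sets M. emeasure M E = ennreal t \<and> enn2real (\<rho> (indicator E)) = v)"

definition zippin_M :: "'a measure \<Rightarrow> (('a \<Rightarrow> ennreal) \<Rightarrow> ennreal) \<Rightarrow> real \<Rightarrow> ereal" where
  "zippin_M M \<rho> x =
     Limsup (at_right 0) (\<lambda>t. ereal (fundamental_fn M \<rho> (x * t) / fundamental_fn M \<rho> t))"

definition zippin_lower :: "'a measure \<Rightarrow> (('a \<Rightarrow> ennreal) \<Rightarrow> ennreal) \<Rightarrow> real" where
  "zippin_lower M \<rho> = Lim (at_right 0) (\<lambda>x. ln (real_of_ereal (zippin_M M \<rho> x)) / ln x)"

definition zippin_upper :: "'a measure \<Rightarrow> (('a \<Rightarrow> ennreal) \<Rightarrow> ennreal) \<Rightarrow> real" where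
  "zippin_upper M \<rho> = Lim at_top (\<lambda>x. ln (real_of_ereal (zippin_M M \<rho> x)) / ln x)"

end

theory Submission
  imports Defs "HOL-Probability.Distribution_Functions" "HOL-Real_Asymp.Real_Asymp"
begin

lemma chi_meas:
  assumes "\<Omega> \<in> sets M" "f \<in> borel_measurable (restrict_space M \<Omega>)"
  shows "(\<lambda>x. indicator \<Omega> x * f x :: ennreal) \<in> borel_measurable M"
proof -
  have "\<Omega> \<inter> space M \<in> sets M" using assms(1) by auto
  from measurable_restrict_space_iff[OF this, of 0 borel f] assms(2)
  have "(\<lambda>x. if x \<in> \<Omega> then f x else 0) \<in> borel_measurable M" by simp
  moreover have "(\<lambda>x. if x \<in> \<Omega> then f x else 0) = (\<lambda>x. indicator \<Omega> x * f x)"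
    by (auto simp: indicator_def)
  ultimately show ?thesis by simp
qed

lemma restrict_ri:
  fixes M :: "'a measure" and \<rho> :: "('a \<Rightarrow> ennreal) \<Rightarrow> ennreal"
  assumes O: "\<Omega> \<in> sets M" and ri: "ri_function_norm M \<rho>"
  shows "ri_function_norm (restrict_space M \<Omega>) (restrict_norm \<Omega> \<rho>)"
proof -
  let ?N = "restrict_space M \<Omega>"
  have OM: "\<Omega> \<inter> space M \<in> sets M" using O by auto
  have fn: "function_norm M \<rho>" using ri by (simp add: ri_function_norm_def)
  note fd = fn[unfolded function_norm_def]
  have A1: "\<forall>f\<in>borel_measurable M. \<rho> f = 0 \<longleftrightarrow> (AE x in M. f x = 0)" using fd by blast
  have A2: "\<forall>f\<in>borel_measurable M. \<forall>a::real. a \<ge> 0 \<longrightarrow> \<rho> (\<lambda>x. ennreal a * f x) = ennreal a * \<rho> f" using fd by blast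
  have A3: "\<forall>f\<in>borel_measurable M. \<forall>g\<in>borel_measurable M. \<rho> (\<lambda>x. f x + g x) \<le> \<rho> f + \<rho> g" using fd by blast
  have A4: "\<forall>f\<in>borel_measurable M. \<forall>g\<in>borel_measurable M.
        (AE x in M. g x \<le> f x) \<longrightarrow> \<rho> g \<le> \<rho> f" using fd by blast
  have A5: "\<forall>F f. (\<forall>n. F n \<in> borel_measurable M) \<and> f \<in> borel_measurable M \<and>
        (AE x in M. incseq (\<lambda>n. F n x) \<and> f x = (SUP n. F n x))
        \<longrightarrow> \<rho> f = (SUP n. \<rho> (F n))" using fd by blast
  have A6: "\<forall>E\<in>sets M. emeasure M E < \<infinity> \<longrightarrow> \<rho> (indicator E) < \<infinity>" using fd by blast
  have A7: "\<forall>E\<in>sets M. emeasure M E < \<infinity> \<longrightarrow>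
        (\<exists>C::real. \<forall>f\<in>borel_measurable M. (\<integral>\<^sup>+x\<in>E. f x \<partial>M) \<le> ennreal C * \<rho> f)" using fd by blast
  have RI: "\<forall>f\<in>borel_measurable M. \<forall>g\<in>borel_measurable M. equimeasurable M f g \<longrightarrow> \<rho> f = \<rho> g"
    using ri by (simp add: ri_function_norm_def)
  note cm = chi_meas[OF O]
  have "function_norm ?N (restrict_norm \<Omega> \<rho>)"
    unfolding function_norm_def restrict_norm_def
  proof (intro conjI ballI allI impI)
    fix f :: "'a \<Rightarrow> ennreal" assume f: "f \<in> borel_measurable ?N"
    have "\<rho> (\<lambda>x. indicator \<Omega> x * f x) = 0 \<longleftrightarrow> (AE x in M. indicator \<Omega> x * f x = 0)"
      by (rule A1[rule_format, OF cm[OF f]])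
    also have "\<dots> \<longleftrightarrow> (AE x in M. x \<in> \<Omega> \<longrightarrow> f x = 0)"
      by (intro AE_cong) (auto simp: indicator_def)
    also have "\<dots> \<longleftrightarrow> (AE x in ?N. f x = 0)" using AE_restrict_space_iff[OF OM] by simp
    finally show "\<rho> (\<lambda>x. indicator \<Omega> x * f x) = 0 \<longleftrightarrow> (AE x in ?N. f x = 0)" .
  next
    fix f :: "'a \<Rightarrow> ennreal" and a :: real assume f: "f \<in> borel_measurable ?N" and a: "0 \<le> a"
    have "(\<lambda>x. indicator \<Omega> x * (ennreal a * f x)) = (\<lambda>x. ennreal a * (indicator \<Omega> x * f x))"
      by (simp add: mult.left_commute)
    then show "\<rho> (\<lambda>x. indicator \<Omega> x * (ennreal a * f x)) = ennreal a * \<rho> (\<lambda>x. indicator \<Omega> x * f x)"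
      using A2 cm[OF f] a by simp
  next
    fix f g :: "'a \<Rightarrow> ennreal" assume f: "f \<in> borel_measurable ?N" and g: "g \<in> borel_measurable ?N"
    have "(\<lambda>x. indicator \<Omega> x * (f x + g x)) = (\<lambda>x. indicator \<Omega> x * f x + indicator \<Omega> x * g x)"
      by (simp add: distrib_left)
    then show "\<rho> (\<lambda>x. indicator \<Omega> x * (f x + g x)) \<le> \<rho> (\<lambda>x. indicator \<Omega> x * f x) + \<rho> (\<lambda>x. indicator \<Omega> x * g x)"
      using A3 cm[OF f] cm[OF g] by simp
  next
    fix f g :: "'a \<Rightarrow> ennreal" assume f: "f \<in> borel_measurable ?N" and g: "g \<in> borel_measurable ?N"
      and le: "AE x in ?N. g x \<le> f x"
    have "AE x in M. indicator \<Omega> x * g x \<le> indicator \<Omega> x * f x"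
      using le unfolding AE_restrict_space_iff[OF OM]
      by eventually_elim (auto simp: indicator_def)
    then show "\<rho> (\<lambda>x. indicator \<Omega> x * g x) \<le> \<rho> (\<lambda>x. indicator \<Omega> x * f x)"
      by (rule A4[rule_format, OF cm[OF f] cm[OF g]])
  next
    fix F :: "nat \<Rightarrow> 'a \<Rightarrow> ennreal" and f :: "'a \<Rightarrow> ennreal" assume H: "(\<forall>n. F n \<in> borel_measurable ?N) \<and> f \<in> borel_measurable ?N \<and>
        (AE x in ?N. incseq (\<lambda>n. F n x) \<and> f x = (SUP n. F n x))"
    have "AE x in M. incseq (\<lambda>n. indicator \<Omega> x * F n x) \<and>
        indicator \<Omega> x * f x = (SUP n. indicator \<Omega> x * F n x)"
    proof -
      have "AE x in M. x \<in> \<Omega> \<longrightarrow> incseq (\<lambda>n. F n x) \<and> f x = (SUP n. F n x)"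
        using H by (simp add: AE_restrict_space_iff[OF OM] del: AE_conj_iff)
      then show ?thesis
        by eventually_elim (auto simp: indicator_def incseq_def)
    qed
    then show "\<rho> (\<lambda>x. indicator \<Omega> x * f x) = (SUP n. \<rho> (\<lambda>x. indicator \<Omega> x * F n x))"
      using H cm by (intro A5[rule_format, of "\<lambda>n x. indicator \<Omega> x * F n x" "\<lambda>x. indicator \<Omega> x * f x"]) auto
  next
    fix E assume E: "E \<in> sets ?N" and fin: "emeasure ?N E < \<infinity>"
    have EO: "E \<subseteq> \<Omega>" "E \<in> sets M" using E sets_restrict_space_iff[OF OM] by auto
    have "(\<lambda>x. indicator \<Omega> x * indicator E x) = (indicator E :: 'a \<Rightarrow> ennreal)"
      using EO by (auto simp: indicator_def fun_eq_iff)
    moreover have "emeasure M E < \<infinity>" using fin emeasure_restrict_space[OF OM EO(1)] by simp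
    ultimately show "\<rho> (\<lambda>x. indicator \<Omega> x * indicator E x) < \<infinity>" using A6 EO by simp
  next
    fix E assume E: "E \<in> sets ?N" and fin: "emeasure ?N E < \<infinity>"
    have EO: "E \<subseteq> \<Omega>" "E \<in> sets M" using E sets_restrict_space_iff[OF OM] by auto
    have "emeasure M E < \<infinity>" using fin emeasure_restrict_space[OF OM EO(1)] by simp
    then obtain C :: real where C: "\<forall>f\<in>borel_measurable M. (\<integral>\<^sup>+x\<in>E. f x \<partial>M) \<le> ennreal C * \<rho> f"
      using A7 EO by blast
    show "\<exists>C::real. \<forall>f\<in>borel_measurable ?N. (\<integral>\<^sup>+x\<in>E. f x \<partial>?N) \<le> ennreal C * \<rho> (\<lambda>x. indicator \<Omega> x * f x)"
    proof (intro exI ballI)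
      fix f :: "'a \<Rightarrow> ennreal" assume f: "f \<in> borel_measurable ?N"
      have "(\<integral>\<^sup>+x\<in>E. f x \<partial>?N) = (\<integral>\<^sup>+x. f x * indicator E x * indicator \<Omega> x \<partial>M)"
        by (simp add: nn_integral_restrict_space[OF OM])
      also have "\<dots> = (\<integral>\<^sup>+x\<in>E. indicator \<Omega> x * f x \<partial>M)"
        using EO by (intro nn_integral_cong) (auto simp: indicator_def)
      also have "\<dots> \<le> ennreal C * \<rho> (\<lambda>x. indicator \<Omega> x * f x)" using C cm[OF f] by auto
      finally show "(\<integral>\<^sup>+x\<in>E. f x \<partial>?N) \<le> ennreal C * \<rho> (\<lambda>x. indicator \<Omega> x * f x)" .
    qed
  qed
  moreover have "\<forall>f\<in>borel_measurable ?N. \<forall>g\<in>borel_measurable ?N. equimeasurable ?N f g \<longrightarrow>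
      restrict_norm \<Omega> \<rho> f = restrict_norm \<Omega> \<rho> g"
  proof (intro ballI impI)
    fix f g :: "'a \<Rightarrow> ennreal" assume f: "f \<in> borel_measurable ?N" and g: "g \<in> borel_measurable ?N"
      and eq: "equimeasurable ?N f g"
    have key: "emeasure M {x\<in>space M. s < indicator \<Omega> x * h x} = emeasure ?N {x\<in>space ?N. s < h x}"
      for s and h :: "'a \<Rightarrow> ennreal"
    proof -
      have "{x\<in>space M. s < indicator \<Omega> x * h x} = {x\<in>space ?N. s < h x}"
        using O sets.sets_into_space[OF O] by (auto simp: indicator_def)
      moreover have "{x\<in>space ?N. s < h x} \<subseteq> \<Omega>" using O by auto
      ultimately show ?thesis using emeasure_restrict_space[OF OM] by simp
    qed
    have "equimeasurable M (\<lambda>x. indicator \<Omega> x * f x) (\<lambda>x. indicator \<Omega> x * g x)"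
      using eq unfolding equimeasurable_def key by simp
    then show "restrict_norm \<Omega> \<rho> f = restrict_norm \<Omega> \<rho> g"
      unfolding restrict_norm_def by (rule RI[rule_format, OF cm[OF f] cm[OF g]])
  qed
  ultimately show ?thesis by (simp add: ri_function_norm_def)
qed

lemma na_real:
  assumes fm: "finite_measure M" and na: "nonatomic_measure M"
    and A: "A \<in> sets M" and pos: "0 < measure M A"
  shows "\<exists>B\<in>sets M. B \<subseteq> A \<and> 0 < measure M B \<and> measure M B < measure M A"
proof -
  interpret finite_measure M by fact
  have "0 < emeasure M A" using pos by (simp add: emeasure_eq_measure)
  then obtain B where B: "B \<in> sets M" "B \<subseteq> A" "0 < emeasure M B" "emeasure M B < emeasure M A"
    using na A unfolding nonatomic_measure_def by blast
  then show ?thesis by (intro bexI[of _ B]) (auto simp: emeasure_eq_measure ennreal_less_iff)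
qed

lemma halving:
  assumes fm: "finite_measure M" and na: "nonatomic_measure M"
    and A: "A \<in> sets M" and pos: "0 < measure M A"
  shows "\<exists>B\<in>sets M. B \<subseteq> A \<and> 0 < measure M B \<and> measure M B \<le> measure M A / 2^n"
proof (induction n)
  case 0
  then show ?case using A pos by auto
next
  case (Suc n)
  interpret finite_measure M by fact
  from Suc obtain B where B: "B \<in> sets M" "B \<subseteq> A" "0 < measure M B" "measure M B \<le> measure M A / 2^n"
    by blast
  from na_real[OF fm na B(1) B(3)] obtain B' where B': "B' \<in> sets M" "B' \<subseteq> B"
    "0 < measure M B'" "measure M B' < measure M B" by blast
  show ?case
  proof (cases "measure M B' \<le> measure M B / 2")
    case True
    have "measure M B / 2 \<le> (measure M A / 2^n) / 2" using B(4) by (rule divide_right_mono) simp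
    then have "measure M B' \<le> measure M A / 2 ^ Suc n"
      using True by simp
    then show ?thesis using B B' by (intro bexI[of _ B']) auto
  next
    case False
    have d: "measure M (B - B') = measure M B - measure M B'"
      using B B' by (simp add: finite_measure_Diff)
    have "measure M B / 2 \<le> (measure M A / 2^n) / 2" using B(4) by (rule divide_right_mono) simp
    then have "measure M (B - B') \<le> measure M A / 2 ^ Suc n"
      using False d by simp
    moreover have "0 < measure M (B - B')" using d B'(4) by simp
    moreover have "B - B' \<in> sets M" "B - B' \<subseteq> A" using B B' by auto
    ultimately show ?thesis by blast
  qed
qed

lemma small_subset:
  assumes fm: "finite_measure M" and na: "nonatomic_measure M"
    and A: "A \<in> sets M" and pos: "0 < measure M A" and e: "0 < e"
  shows "\<exists>B\<in>sets M. B \<subseteq> A \<and> 0 < measure M B \<and> measure M B < e"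
proof -
  obtain n where n: "measure M A / e < 2^n" using real_arch_pow[of 2 "measure M A / e"] by auto
  then have "measure M A / 2^n < e" using e by (simp add: field_simps)
  moreover obtain B where "B \<in> sets M" "B \<subseteq> A" "0 < measure M B" "measure M B \<le> measure M A / 2^n"
    using halving[OF fm na A pos, of n] by blast
  ultimately show ?thesis by (intro bexI[of _ B]) auto
qed

lemma sierpinski:
  assumes fm: "finite_measure M" and na: "nonatomic_measure M"
    and A: "A \<in> sets M" and t0: "0 \<le> t" and tA: "t \<le> measure M A"
  shows "\<exists>E\<in>sets M. E \<subseteq> A \<and> measure M E = t"
proof -
  interpret finite_measure M by fact
  define adm where "adm E B \<longleftrightarrow> B \<in> sets M \<and> B \<subseteq> A - E \<and> measure M E + measure M B \<le> t" for E B
  define S where "S E = Sup (measure M ` {B. adm E B})" for E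
  define step where "step E = E \<union> (SOME B. adm E B \<and> S E \<le> 2 * measure M B)" for E
  define En where "En n = (step ^^ n) {}" for n
  have bdd: "bdd_above (measure M ` {B. adm E B})" for E
    by (rule bdd_aboveI[of _ "measure M (space M)"]) (auto simp: adm_def intro!: bounded_measure)
  have ex: "\<exists>B. adm E B \<and> S E \<le> 2 * measure M B" if "E \<in> sets M" "E \<subseteq> A" "measure M E \<le> t" for E
  proof (cases "S E \<le> 0")
    case True
    then show ?thesis using that by (intro exI[of _ "{}"]) (auto simp: adm_def)
  next
    case False
    have ne: "measure M ` {B. adm E B} \<noteq> {}" using that by (auto simp: adm_def intro!: exI[of _ "{}"])
    have "S E / 2 < S E" using False by simp
    then obtain B where "adm E B" "S E / 2 < measure M B"
      using less_cSup_iff[OF ne bdd] unfolding S_def by auto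
    then show ?thesis by (intro exI[of _ B]) auto
  qed
  have sf: "step E \<in> sets M \<and> step E \<subseteq> A \<and> measure M (step E) \<le> t \<and>
     (\<exists>B. step E = E \<union> B \<and> adm E B \<and> S E \<le> 2 * measure M B \<and>
          measure M (step E) = measure M E + measure M B)"
    if E: "E \<in> sets M" "E \<subseteq> A" "measure M E \<le> t" for E
  proof -
    define B where "B = (SOME B. adm E B \<and> S E \<le> 2 * measure M B)"
    have exB: "\<exists>B. adm E B \<and> S E \<le> 2 * measure M B" by (rule ex[OF E])
    have B: "adm E B \<and> S E \<le> 2 * measure M B" unfolding B_def by (rule someI_ex[OF exB])
    have eq: "step E = E \<union> B" by (simp add: step_def B_def)
    have Bs: "B \<in> sets M" "B \<subseteq> A - E" "measure M E + measure M B \<le> t"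
      using B unfolding adm_def by blast+
    have m: "measure M (E \<union> B) = measure M E + measure M B"
      using Bs E by (intro finite_measure_Union) auto
    show ?thesis unfolding eq using m Bs E B by (intro conjI exI[of _ B]) auto
  qed
  have inv: "En n \<in> sets M \<and> En n \<subseteq> A \<and> measure M (En n) \<le> t" for n
  proof (induction n)
    case 0 then show ?case using t0 by (simp add: En_def)
  next
    case (Suc n)
    have "En (Suc n) = step (En n)" by (simp add: En_def)
    then show ?case using sf[of "En n"] Suc by simp
  qed
  have stepB: "\<exists>B. En (Suc n) = En n \<union> B \<and> adm (En n) B \<and> S (En n) \<le> 2 * measure M B
      \<and> measure M (En (Suc n)) = measure M (En n) + measure M B" for n
  proof -
    have "En (Suc n) = step (En n)" by (simp add: En_def)
    then show ?thesis using sf[of "En n"] inv[of n] by simp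
  qed
  have inc: "incseq En"
    by (rule incseq_SucI) (use stepB in blast)
  define U where "U = (\<Union>n. En n)"
  have U: "U \<in> sets M" "U \<subseteq> A" using inv by (auto simp: U_def)
  have lim: "(\<lambda>n. measure M (En n)) \<longlonglongrightarrow> measure M U"
    unfolding U_def using inv inc by (intro finite_Lim_measure_incseq) auto
  have Ut: "measure M U \<le> t"
    by (rule LIMSEQ_le_const2[OF lim]) (use inv in auto)
  have EnU: "measure M (En n) \<le> measure M U" for n
    using U inv by (intro finite_measure_mono) (auto simp: U_def)
  show ?thesis
  proof (cases "measure M U < t")
    case False
    then show ?thesis using U Ut by (intro bexI[of _ U]) auto
  next
    case True
    have "measure M (A - U) = measure M A - measure M U" using U A by (simp add: finite_measure_Diff)
    then have pos: "0 < measure M (A - U)" using True tA by simp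
    obtain C where C: "C \<in> sets M" "C \<subseteq> A - U" "0 < measure M C" "measure M C < t - measure M U"
      using small_subset[OF fm na _ pos, of "t - measure M U"] U A True by auto
    have grow: "measure M (En (Suc n)) \<ge> measure M (En n) + measure M C / 2" for n
    proof -
      obtain B where B: "adm (En n) B" "S (En n) \<le> 2 * measure M B"
        "measure M (En (Suc n)) = measure M (En n) + measure M B" using stepB by blast
      have "adm (En n) C" using C EnU[of n] by (auto simp: adm_def U_def)
      then have "measure M C \<le> S (En n)" unfolding S_def by (intro cSup_upper bdd) auto
      then show ?thesis using B by simp
    qed
    have lower: "measure M (En n) \<ge> real n * (measure M C / 2)" for n
    proof (induction n)
      case (Suc n) then show ?case using grow[of n] by (simp add: algebra_simps)
    qed simp
    obtain n :: nat where n: "t / (measure M C / 2) < real n" using reals_Archimedean2 by blast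
    then have "t < real n * (measure M C / 2)" using C by (simp add: field_simps)
    then show ?thesis using lower[of n] inv[of n] by simp
  qed
qed

lemma sierpinski_rel:
  assumes fm: "finite_measure M" and na: "nonatomic_measure M"
    and A: "A \<in> sets M" and B: "B \<in> sets M" and AB: "A \<subseteq> B"
    and t1: "measure M A \<le> t" and t2: "t \<le> measure M B"
  shows "\<exists>C\<in>sets M. A \<subseteq> C \<and> C \<subseteq> B \<and> measure M C = t"
proof -
  interpret finite_measure M by fact
  have d: "measure M (B - A) = measure M B - measure M A" using A B AB by (simp add: finite_measure_Diff)
  obtain E where E: "E \<in> sets M" "E \<subseteq> B - A" "measure M E = t - measure M A"
    using sierpinski[OF fm na _ _ , of "B - A" "t - measure M A"] A B t1 t2 d by auto
  have "measure M (A \<union> E) = measure M A + measure M E" using E A by (intro finite_measure_Union) auto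
  then show ?thesis using E A AB by (intro bexI[of _ "A \<union> E"]) auto
qed

definition mid :: "'a measure \<Rightarrow> 'a set \<Rightarrow> 'a set \<Rightarrow> 'a set" where
  "mid M A B = (SOME C. C \<in> sets M \<and> A \<subseteq> C \<and> C \<subseteq> B \<and> measure M C = (measure M A + measure M B) / 2)"

fun lvl :: "'a measure \<Rightarrow> nat \<Rightarrow> nat \<Rightarrow> 'a set" where
  "lvl M 0 k = (if k = 0 then {} else space M)"
| "lvl M (Suc n) k = (if even k then lvl M n (k div 2)
      else mid M (lvl M n (k div 2)) (lvl M n (Suc (k div 2))))"

lemma mid_prop:
  assumes fm: "finite_measure M" and na: "nonatomic_measure M"
    and A: "A \<in> sets M" and B: "B \<in> sets M" and AB: "A \<subseteq> B"
  shows "mid M A B \<in> sets M \<and> A \<subseteq> mid M A B \<and> mid M A B \<subseteq> B \<and>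
    measure M (mid M A B) = (measure M A + measure M B) / 2"
proof -
  interpret finite_measure M by fact
  have le: "measure M A \<le> measure M B" using A B AB by (intro finite_measure_mono) auto
  have "\<exists>C\<in>sets M. A \<subseteq> C \<and> C \<subseteq> B \<and> measure M C = (measure M A + measure M B) / 2"
    by (rule sierpinski_rel[OF fm na A B AB]) (use le in auto)
  then have ex: "\<exists>C. C \<in> sets M \<and> A \<subseteq> C \<and> C \<subseteq> B \<and> measure M C = (measure M A + measure M B) / 2"
    by blast
  have e: "mid M A B = (SOME C. C \<in> sets M \<and> A \<subseteq> C \<and> C \<subseteq> B \<and> measure M C = (measure M A + measure M B) / 2)"
    by (simp add: mid_def)
  show ?thesis unfolding e by (rule someI_ex[OF ex])
qed

lemma lvl_even: "lvl M (Suc n) (2*j) = lvl M n j" by simp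
lemma lvl_odd: "lvl M (Suc n) (Suc (2*j)) = mid M (lvl M n j) (lvl M n (Suc j))" by simp
lemma lvl_0: "lvl M 0 0 = {}" "lvl M 0 (Suc 0) = space M" by simp_all

declare lvl.simps[simp del]

lemma lvl_inv:
  assumes fm: "finite_measure M" and na: "nonatomic_measure M"
  shows "(\<forall>k\<le>2^n. lvl M n k \<in> sets M \<and> measure M (lvl M n k) = measure M (space M) * real k / 2^n) \<and>
         (\<forall>k<2^n. lvl M n k \<subseteq> lvl M n (Suc k))"
proof (induction n)
  case 0
  show ?case
  proof (rule conjI; intro allI impI)
    fix k :: nat assume "k \<le> 2^0"
    then have "k = 0 \<or> k = Suc 0" by auto
    then show "lvl M 0 k \<in> sets M \<and> measure M (lvl M 0 k) = measure M (space M) * real k / 2^0"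
      by (auto simp: lvl_0)
  next
    fix k :: nat assume "k < 2^0" then have "k = 0" by simp
    then show "lvl M 0 k \<subseteq> lvl M 0 (Suc k)" by (simp add: lvl_0)
  qed
next
  case (Suc n)
  let ?L = "measure M (space M)"
  have IH1: "lvl M n k \<in> sets M" "measure M (lvl M n k) = ?L * real k / 2^n" if "k \<le> 2^n" for k
    using Suc.IH that by simp_all
  have IH2: "lvl M n k \<subseteq> lvl M n (Suc k)" if "k < 2^n" for k
    using Suc.IH that by simp
  have midj: "mid M (lvl M n j) (lvl M n (Suc j)) \<in> sets M \<and>
      lvl M n j \<subseteq> mid M (lvl M n j) (lvl M n (Suc j)) \<and>
      mid M (lvl M n j) (lvl M n (Suc j)) \<subseteq> lvl M n (Suc j) \<and>
      measure M (mid M (lvl M n j) (lvl M n (Suc j))) = (measure M (lvl M n j) + measure M (lvl M n (Suc j))) / 2"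
    if j: "j < 2^n" for j
  proof -
    have j1: "j \<le> 2^n" "Suc j \<le> 2^n" using j by auto
    show ?thesis by (rule mid_prop[OF fm na IH1(1)[OF j1(1)] IH1(1)[OF j1(2)] IH2[OF j]])
  qed
  show ?case
  proof (rule conjI; intro allI impI)
    fix k :: nat assume k: "k \<le> 2 ^ Suc n"
    show "lvl M (Suc n) k \<in> sets M \<and> measure M (lvl M (Suc n) k) = ?L * real k / 2 ^ Suc n"
    proof (cases "even k")
      case True
      then obtain j where kj: "k = 2*j" by (rule evenE)
      then have j: "j \<le> 2^n" using k by simp
      have a: "?L * real j / 2^n = ?L * real (2*j) / 2^Suc n" by simp
      show ?thesis unfolding kj lvl_even using IH1(1)[OF j] trans[OF IH1(2)[OF j] a] by blast
    next
      case False
      define j where "j = k div 2"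
      have kj: "k = Suc (2*j)" using False unfolding j_def by presburger
      then have j: "j < 2^n" using k by simp
      have a: "(?L * real j / 2^n + ?L * real (Suc j) / 2^n) / 2 = ?L * real (Suc (2*j)) / 2 ^ Suc n"
        by (simp add: field_simps)
      have j1: "j \<le> 2^n" "Suc j \<le> 2^n" using j by auto
      have b: "measure M (mid M (lvl M n j) (lvl M n (Suc j))) = (?L * real j / 2^n + ?L * real (Suc j) / 2^n) / 2"
        using midj[OF j] IH1(2)[OF j1(1)] IH1(2)[OF j1(2)] by simp
      show ?thesis unfolding kj lvl_odd using midj[OF j] trans[OF b a] by blast
    qed
  next
    fix k :: nat assume k: "k < 2 ^ Suc n"
    show "lvl M (Suc n) k \<subseteq> lvl M (Suc n) (Suc k)"
    proof (cases "even k")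
      case True
      then obtain j where kj: "k = 2*j" by (rule evenE)
      then have j: "j < 2^n" using k by simp
      show ?thesis unfolding kj lvl_even lvl_odd using midj[OF j] by blast
    next
      case False
      define j where "j = k div 2"
      have kj: "k = Suc (2*j)" using False unfolding j_def by presburger
      then have j: "j < 2^n" using k by simp
      have "Suc k = 2 * Suc j" using kj by simp
      then show ?thesis unfolding kj lvl_odd using midj[OF j] lvl_even[of M n "Suc j"] by simp
    qed
  qed
qed

lemma lvl_sets: "finite_measure M \<Longrightarrow> nonatomic_measure M \<Longrightarrow> k \<le> 2^n \<Longrightarrow> lvl M n k \<in> sets M"
  using lvl_inv[of M n] by simp

lemma lvl_measure: "finite_measure M \<Longrightarrow> nonatomic_measure M \<Longrightarrow> k \<le> 2^n \<Longrightarrow>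
    measure M (lvl M n k) = measure M (space M) * real k / 2^n"
  using lvl_inv[of M n] by simp

lemma lvl_top: "lvl M n (2^n) = space M"
proof (induction n)
  case 0 then show ?case by (simp add: lvl_0)
next
  case (Suc n) then show ?case using lvl_even[of M n "2^n"] by simp
qed

lemma lvl_mono:
  assumes fm: "finite_measure M" and na: "nonatomic_measure M" and kk: "k \<le> k'" and k': "k' \<le> 2^n"
  shows "lvl M n k \<subseteq> lvl M n k'"
  using kk k'
proof (induction k' rule: dec_induct)
  case base then show ?case by simp
next
  case (step m)
  then have "lvl M n m \<subseteq> lvl M n (Suc m)" using lvl_inv[OF fm na, of n] by simp
  with step show ?case by simp
qed

lemma lvl_refine: "lvl M (n + m) (k * 2^m) = lvl M n k"
proof (induction m)
  case (Suc m)
  have e1: "n + Suc m = Suc (n + m)" by simp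
  have e2: "k * 2 ^ Suc m = 2 * (k * 2^m)" by (simp add: mult.left_commute)
  have "lvl M (n + Suc m) (k * 2 ^ Suc m) = lvl M (Suc (n + m)) (2 * (k * 2^m))"
    unfolding e1 e2 ..
  also have "\<dots> = lvl M (n + m) (k * 2^m)" by (rule lvl_even)
  finally have "lvl M (n + Suc m) (k * 2 ^ Suc m) = lvl M (n + m) (k * 2^m)" .
  then show ?case using Suc by simp
qed simp

lemma lvl_cmp:
  assumes fm: "finite_measure M" and na: "nonatomic_measure M"
    and k: "k \<le> 2^n" and k': "k' \<le> 2^n'" and le: "real k' / 2^n' \<le> real k / 2^n"
  shows "lvl M n' k' \<subseteq> lvl M n k"
proof -
  have e1: "lvl M n' k' = lvl M (n' + n) (k' * 2^n)" by (simp add: lvl_refine)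
  have e2: "lvl M n k = lvl M (n' + n) (k * 2^n')" by (simp add: lvl_refine add.commute)
  have "real k' * 2^n \<le> real k * 2^n'" using le by (simp add: field_simps)
  then have "real (k' * 2^n) \<le> real (k * 2^n')" by simp
  then have a: "k' * 2^n \<le> k * 2^n'" by (simp only: of_nat_le_iff)
  have b: "k * 2^n' \<le> 2^(n' + n)" using k by (simp add: power_add)
  show ?thesis unfolding e1 e2 by (rule lvl_mono[OF fm na a b])
qed

definition dy :: "'a measure \<Rightarrow> 'a \<Rightarrow> real set" where
  "dy M x = {real k / 2^n | n k. k \<le> 2^n \<and> x \<in> lvl M n k}"

definition tau :: "'a measure \<Rightarrow> 'a \<Rightarrow> real" where
  "tau M x = measure M (space M) * Inf (dy M x)"

lemma dy_props:
  assumes "x \<in> space M"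
  shows "1 \<in> dy M x" "dy M x \<noteq> {}" "bdd_below (dy M x)" "\<And>d. d \<in> dy M x \<Longrightarrow> 0 \<le> d \<and> d \<le> 1"
proof -
  have "x \<in> lvl M 0 1" using assms by (simp add: lvl_0)
  then show "1 \<in> dy M x" unfolding dy_def by (intro CollectI exI[of _ 0] exI[of _ "1::nat"]) simp
  then show "dy M x \<noteq> {}" by auto
  show "\<And>d. d \<in> dy M x \<Longrightarrow> 0 \<le> d \<and> d \<le> 1" unfolding dy_def by auto
  show "bdd_below (dy M x)" unfolding dy_def by (rule bdd_belowI[of _ 0]) auto
qed

lemma tau_range:
  assumes "x \<in> space M"
  shows "0 \<le> tau M x" "tau M x \<le> measure M (space M)"
proof -
  note d = dy_props[OF assms]
  have "0 \<le> Inf (dy M x)" using d by (intro cInf_greatest) auto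
  moreover have "Inf (dy M x) \<le> 1" using d by (intro cInf_lower) auto
  ultimately show "0 \<le> tau M x" "tau M x \<le> measure M (space M)"
    unfolding tau_def by (auto intro: mult_left_le)
qed

lemma tau_less:
  assumes fm: "finite_measure M" and na: "nonatomic_measure M" and L: "0 < measure M (space M)"
  shows "{x\<in>space M. tau M x < s} =
    (\<Union>p\<in>{p. snd p \<le> 2^fst p \<and> measure M (space M) * real (snd p) / 2^fst p < s}. lvl M (fst p) (snd p))"
proof (intro equalityI subsetI)
  let ?L = "measure M (space M)"
  fix x assume "x \<in> {x\<in>space M. tau M x < s}"
  then have x: "x \<in> space M" "?L * Inf (dy M x) < s" by (auto simp: tau_def)
  then have "Inf (dy M x) < s / ?L" using L by (simp add: field_simps)
  then obtain d where "d \<in> dy M x" "d < s / ?L" using cInf_less_iff[OF dy_props(2,3)[OF x(1)]] by auto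
  then obtain n k where nk: "d = real k / 2^n" "k \<le> 2^n" "x \<in> lvl M n k" unfolding dy_def by auto
  have "?L * d < s" using \<open>d < s / ?L\<close> L by (simp add: field_simps)
  then have "?L * (real k / 2^n) < s" using nk(1) by simp
  then show "x \<in> (\<Union>p\<in>{p. snd p \<le> 2^fst p \<and> ?L * real (snd p) / 2^fst p < s}. lvl M (fst p) (snd p))"
    using nk by (intro UN_I[of "(n,k)"]) auto
next
  let ?L = "measure M (space M)"
  fix x assume "x \<in> (\<Union>p\<in>{p. snd p \<le> 2^fst p \<and> ?L * real (snd p) / 2^fst p < s}. lvl M (fst p) (snd p))"
  then obtain n k where nk: "k \<le> 2^n" "?L * real k / 2^n < s" "x \<in> lvl M n k" by auto
  have "x \<in> space M" using lvl_sets[OF fm na nk(1)] nk(3) sets.sets_into_space by blast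
  moreover have "real k / 2^n \<in> dy M x" using nk unfolding dy_def by blast
  then have "Inf (dy M x) \<le> real k / 2^n" using dy_props[OF \<open>x \<in> space M\<close>] by (intro cInf_lower) auto
  then have "tau M x \<le> ?L * (real k / 2^n)" unfolding tau_def using L by (intro mult_left_mono) auto
  ultimately show "x \<in> {x\<in>space M. tau M x < s}" using nk by simp
qed

lemma tau_measurable:
  assumes fm: "finite_measure M" and na: "nonatomic_measure M" and L: "0 < measure M (space M)"
  shows "tau M \<in> borel_measurable M"
proof (subst borel_measurable_iff_less, intro allI)
  fix s
  show "{w \<in> space M. tau M w < s} \<in> sets M"
    unfolding tau_less[OF fm na L]
    by (intro sets.countable_UN) (auto intro: lvl_sets[OF fm na])
qed

lemma tau_dyadic:
  assumes fm: "finite_measure M" and na: "nonatomic_measure M" and L: "0 < measure M (space M)"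
    and k: "k \<le> 2^n"
  shows "lvl M n k \<subseteq> {x\<in>space M. tau M x \<le> measure M (space M) * real k / 2^n}"
    "{x\<in>space M. tau M x < measure M (space M) * real k / 2^n} \<subseteq> lvl M n k"
proof -
  let ?L = "measure M (space M)"
  show "lvl M n k \<subseteq> {x\<in>space M. tau M x \<le> ?L * real k / 2^n}"
  proof
    fix x assume x: "x \<in> lvl M n k"
    have "x \<in> space M" using lvl_sets[OF fm na k] x sets.sets_into_space by blast
    moreover have "real k / 2^n \<in> dy M x" using x k unfolding dy_def by blast
    then have "Inf (dy M x) \<le> real k / 2^n" using dy_props[OF \<open>x \<in> space M\<close>] by (intro cInf_lower) auto
    then have "tau M x \<le> ?L * (real k / 2^n)" unfolding tau_def using L by (intro mult_left_mono) auto
    ultimately show "x \<in> {x\<in>space M. tau M x \<le> ?L * real k / 2^n}" by simp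
  qed
  show "{x\<in>space M. tau M x < ?L * real k / 2^n} \<subseteq> lvl M n k"
  proof
    fix x assume "x \<in> {x\<in>space M. tau M x < ?L * real k / 2^n}"
    then obtain n' k' where nk: "k' \<le> 2^n'" "?L * real k' / 2^n' < ?L * real k / 2^n" "x \<in> lvl M n' k'"
      unfolding tau_less[OF fm na L] by auto
    have "real k' / 2^n' \<le> real k / 2^n" using nk(2) L by (simp add: field_simps)
    then show "x \<in> lvl M n k" using lvl_cmp[OF fm na k nk(1)] nk(3) by blast
  qed
qed

lemma tau_cdf:
  assumes fm: "finite_measure M" and na: "nonatomic_measure M" and L: "0 < measure M (space M)"
  shows "measure M {x\<in>space M. tau M x \<le> t} = max 0 (min t (measure M (space M)))"
proof -
  interpret finite_measure M by fact
  let ?L = "measure M (space M)"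
  have [measurable]: "tau M \<in> borel_measurable M" by (rule tau_measurable[OF fm na L])
  let ?F = "\<lambda>t. measure M {x\<in>space M. tau M x \<le> t}"
  have Fs: "{x\<in>space M. tau M x \<le> t} \<in> sets M" for t by measurable
  consider "t < 0" | "?L \<le> t" | "0 \<le> t" "t < ?L" by linarith
  then show ?thesis
  proof cases
    case 1
    then have e: "{x\<in>space M. tau M x \<le> t} = {}" using tau_range(1)[of _ M] by force
    show ?thesis unfolding e using 1 by simp
  next
    case 2
    then have e: "{x\<in>space M. tau M x \<le> t} = space M" using tau_range(2)[of _ M] by force
    show ?thesis unfolding e using 2 L by simp
  next
    case 3
    have bnd: "\<bar>?F t - t\<bar> \<le> ?L / 2^n" for n
    proof -
      define j where "j = nat \<lfloor>t * 2^n / ?L\<rfloor>"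
      have q0: "0 \<le> t * 2^n / ?L" using 3 L by simp
      have j1: "real j \<le> t * 2^n / ?L" "t * 2^n / ?L < real j + 1"
        unfolding j_def using q0 by linarith+
      have "t * 2^n / ?L < 2^n" using 3 L by (simp add: field_simps)
      then have "real j < 2^n" using j1 by linarith
      then have jn: "Suc j \<le> 2^n" by (metis Suc_leI of_nat_less_iff of_nat_numeral of_nat_power)
      have a1: "?L * real j / 2^n \<le> t" using j1 L by (simp add: field_simps)
      have a2: "t < ?L * real (Suc j) / 2^n" using j1 L by (simp add: field_simps)
      have "lvl M n j \<subseteq> {x\<in>space M. tau M x \<le> t}"
        using tau_dyadic(1)[OF fm na L, of j n] jn a1 by force
      then have lo: "?L * real j / 2^n \<le> ?F t"
        using lvl_measure[OF fm na, of j n] jn Fs[of t] by (metis Suc_leD finite_measure_mono)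
      have "{x\<in>space M. tau M x \<le> t} \<subseteq> lvl M n (Suc j)"
        using tau_dyadic(2)[OF fm na L jn] a2 by force
      then have hi: "?F t \<le> ?L * real (Suc j) / 2^n"
        using lvl_measure[OF fm na jn] lvl_sets[OF fm na jn] by (metis finite_measure_mono)
      have "?L * real (Suc j) / 2^n = ?L * real j / 2^n + ?L / 2^n" by (simp add: field_simps)
      then show ?thesis using lo hi a1 a2 by linarith
    qed
    have "?F t = t"
    proof (rule ccontr)
      assume ne: "?F t \<noteq> t"
      then have d: "0 < \<bar>?F t - t\<bar>" by simp
      obtain n where n: "?L / \<bar>?F t - t\<bar> < 2^n" using real_arch_pow[of 2 "?L / \<bar>?F t - t\<bar>"] by auto
      then have "?L / 2^n < \<bar>?F t - t\<bar>" using d by (simp add: field_simps)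
      then show False using bnd[of n] by linarith
    qed
    then show ?thesis using 3 by simp
  qed
qed

lemma tau_distr_borel:
  assumes fm: "finite_measure M" and na: "nonatomic_measure M" and L: "0 < measure M (space M)"
  shows "distr M borel (tau M) = density lborel (indicator {0..measure M (space M)})"
proof -
  interpret finite_measure M by fact
  let ?L = "measure M (space M)"
  have [measurable]: "tau M \<in> borel_measurable M" by (rule tau_measurable[OF fm na L])
  let ?D = "density lborel (indicator {0..?L}) :: real measure"
  have emD: "emeasure ?D A = emeasure lborel ({0..?L} \<inter> A)" if "A \<in> sets borel" for A
    using that by (intro emeasure_restricted) auto
  have finD: "finite_measure ?D"
  proof
    have "emeasure ?D (space ?D) = emeasure lborel {0..?L}" using emD[of UNIV] by simp
    then show "emeasure ?D (space ?D) \<noteq> \<infinity>" using L by simp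
  qed
  have fb1: "finite_borel_measure (distr M borel (tau M))"
    unfolding finite_borel_measure_def finite_borel_measure_axioms_def
    by (auto intro: finite_measure_distr)
  have fb2: "finite_borel_measure ?D"
    unfolding finite_borel_measure_def finite_borel_measure_axioms_def using finD by simp
  have "cdf (distr M borel (tau M)) x = cdf ?D x" for x
  proof -
    have "cdf (distr M borel (tau M)) x = measure M (tau M -` {..x} \<inter> space M)"
      unfolding cdf_def by (subst measure_distr) auto
    also have "tau M -` {..x} \<inter> space M = {y\<in>space M. tau M y \<le> x}" by auto
    also have "measure M \<dots> = max 0 (min x ?L)" by (rule tau_cdf[OF fm na L])
    also have "\<dots> = cdf ?D x"
    proof -
      have "cdf ?D x = enn2real (emeasure ?D {..x})"
        by (simp only: cdf_def measure_def[of ?D "{..x}"])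
      also have "\<dots> = enn2real (emeasure lborel ({0..?L} \<inter> {..x}))"
        using emD[of "{..x}"] by simp
      also have "\<dots> = max 0 (min x ?L)"
      proof (cases "x < 0")
        case True then have "{0..?L} \<inter> {..x} = {}" by auto
        then show ?thesis using True by simp
      next
        case False
        then have "{0..?L} \<inter> {..x} = {0..min x ?L}" by auto
        then show ?thesis using False L by simp
      qed
      finally show ?thesis by simp
    qed
    finally show ?thesis .
  qed
  then show ?thesis using cdf_unique'[OF fb1 fb2] by blast
qed

lemma tau_push:
  assumes fm: "finite_measure M" and na: "nonatomic_measure M" and L: "0 < measure M (space M)"
    and B: "B \<in> sets borel"
  shows "emeasure M (tau M -` B \<inter> space M) = emeasure lborel (B \<inter> {0..measure M (space M)})"
proof -
  have [measurable]: "tau M \<in> borel_measurable M" by (rule tau_measurable[OF fm na L])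
  have "emeasure M (tau M -` B \<inter> space M) = emeasure (distr M borel (tau M)) B"
    using B by (subst emeasure_distr) auto
  also have "\<dots> = emeasure (density lborel (indicator {0..measure M (space M)})) B"
    unfolding tau_distr_borel[OF fm na L] ..
  also have "\<dots> = emeasure lborel ({0..measure M (space M)} \<inter> B)"
    using B by (intro emeasure_restricted) auto
  finally show ?thesis by (simp add: Int_commute)
qed

lemma tau_rep:
  assumes fm: "finite_measure M" and na: "nonatomic_measure M" and L: "0 < measure M (space M)"
  shows "tau M \<in> measurable M (rep_space M)" "distr M (rep_space M) (tau M) = rep_space M"
proof -
  let ?L = "measure M (space M)"
  have m: "tau M \<in> borel_measurable M" by (rule tau_measurable[OF fm na L])
  have "tau M \<in> measurable M lborel" using m by simp
  moreover have "tau M \<in> space M \<rightarrow> {0..?L}" using tau_range[of _ M] by auto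
  ultimately show tm: "tau M \<in> measurable M (rep_space M)"
    unfolding rep_space_def by (intro measurable_restrict_space2)
  show "distr M (rep_space M) (tau M) = rep_space M"
  proof (rule measure_eqI)
    show "sets (distr M (rep_space M) (tau M)) = sets (rep_space M)" by simp
    fix A assume "A \<in> sets (distr M (rep_space M) (tau M))"
    then have A: "A \<in> sets (rep_space M)" by simp
    then have A2: "A \<subseteq> {0..?L}" "A \<in> sets borel"
      unfolding rep_space_def using sets_restrict_space_iff[of "{0..?L}" lborel] by auto
    have "emeasure (distr M (rep_space M) (tau M)) A = emeasure M (tau M -` A \<inter> space M)"
      by (rule emeasure_distr[OF tm A])
    also have "\<dots> = emeasure lborel (A \<inter> {0..?L})" by (rule tau_push[OF fm na L A2(2)])
    also have "\<dots> = emeasure (rep_space M) A"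
      unfolding rep_space_def using A2 by (subst emeasure_restrict_space) (auto simp: Int_absorb2)
    finally show "emeasure (distr M (rep_space M) (tau M)) A = emeasure (rep_space M) A" .
  qed
qed

lemma dr_le_iff:
  fixes f :: "'a \<Rightarrow> ennreal"
  assumes f[measurable]: "f \<in> borel_measurable M"
  shows "decr_rearr M f t \<le> s \<longleftrightarrow> emeasure M {x\<in>space M. s < f x} \<le> ennreal t"
proof
  assume "emeasure M {x\<in>space M. s < f x} \<le> ennreal t"
  then show "decr_rearr M f t \<le> s" unfolding decr_rearr_def by (intro Inf_lower) simp
next
  assume le: "decr_rearr M f t \<le> s"
  show "emeasure M {x\<in>space M. s < f x} \<le> ennreal t"
  proof (cases "s = \<infinity>")
    case True
    then show ?thesis by simp
  next
    case False
    then have st: "s < \<infinity>" by (simp add: less_top)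
    define sn where "sn n = s + ennreal (inverse (real (Suc n)))" for n
    define A where "A n = {x\<in>space M. sn n < f x}" for n
    have lim: "sn \<longlonglongrightarrow> s"
    proof -
      have "(\<lambda>n. ennreal (inverse (real (Suc n)))) \<longlonglongrightarrow> ennreal 0"
        by (intro tendsto_ennrealI LIMSEQ_inverse_real_of_nat)
      then have "(\<lambda>n. s + ennreal (inverse (real (Suc n)))) \<longlonglongrightarrow> s + ennreal 0"
        by (intro tendsto_add) auto
      then show ?thesis unfolding sn_def[abs_def] by simp
    qed
    have s_less: "s < sn n" for n
    proof -
      have "s + 0 < s + ennreal (inverse (real (Suc n)))"
        using False by (subst ennreal_add_left_cancel_less) auto
      then show ?thesis by (simp add: sn_def)
    qed
    have dec: "sn (Suc n) \<le> sn n" for n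
      unfolding sn_def by (intro add_left_mono ennreal_leI) (simp add: field_simps)
    have incA: "incseq A"
      by (rule incseq_SucI) (auto simp: A_def intro: le_less_trans[OF dec])
    have Asets: "range A \<subseteq> sets M" unfolding A_def by auto
    have UA: "(\<Union>n. A n) = {x\<in>space M. s < f x}"
    proof (intro equalityI subsetI)
      fix x assume "x \<in> (\<Union>n. A n)"
      then show "x \<in> {x\<in>space M. s < f x}" unfolding A_def using s_less by (auto intro: less_trans)
    next
      fix x assume x: "x \<in> {x\<in>space M. s < f x}"
      then have "eventually (\<lambda>n. sn n < f x) sequentially"
        using order_tendstoD(2)[OF lim] by auto
      then obtain n where "sn n < f x" by (auto dest: eventually_happens)
      then show "x \<in> (\<Union>n. A n)" using x unfolding A_def by auto
    qed
    have An: "emeasure M (A n) \<le> ennreal t" for n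
    proof -
      have "Inf {s. emeasure M {x\<in>space M. s < f x} \<le> ennreal t} < sn n"
        using le s_less[of n] unfolding decr_rearr_def by (rule le_less_trans)
      then obtain s' where s': "emeasure M {x\<in>space M. s' < f x} \<le> ennreal t" "s' < sn n"
        by (auto simp: Inf_less_iff)
      have "A n \<subseteq> {x\<in>space M. s' < f x}" unfolding A_def using s'(2) by (auto intro: less_trans)
      then have "emeasure M (A n) \<le> emeasure M {x\<in>space M. s' < f x}"
        by (intro emeasure_mono) auto
      then show ?thesis using s'(1) by simp
    qed
    have "emeasure M {x\<in>space M. s < f x} = (SUP n. emeasure M (A n))"
      unfolding UA[symmetric] by (rule SUP_emeasure_incseq[OF Asets incA, symmetric])
    also have "\<dots> \<le> ennreal t" using An by (intro SUP_least)
    finally show ?thesis .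
  qed
qed

lemma dr_gt_iff:
  fixes f :: "'a \<Rightarrow> ennreal"
  assumes f: "f \<in> borel_measurable M"
  shows "s < decr_rearr M f t \<longleftrightarrow> ennreal t < emeasure M {x\<in>space M. s < f x}"
  using dr_le_iff[OF f, of t s] by (simp add: not_le[symmetric])

lemma dr_meas:
  fixes f :: "'a \<Rightarrow> ennreal"
  assumes f: "f \<in> borel_measurable M"
  shows "decr_rearr M f \<in> borel_measurable borel"
proof (rule borel_measurableI_greater)
  fix a
  have "{x \<in> space borel. a < decr_rearr M f x} = {t. ennreal t < emeasure M {x\<in>space M. a < f x}}"
    using dr_gt_iff[OF f] by auto
  also have "\<dots> \<in> sets borel"
    by (intro borel_open open_Collect_less) (auto intro: continuous_intros continuous_on_ennreal continuous_on_id)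
  finally show "{x \<in> space borel. a < decr_rearr M f x} \<in> sets borel" .
qed

lemma leb_below:
  assumes L: "0 \<le> L" and c: "c \<le> ennreal L"
  shows "emeasure lborel {t\<in>{0..L}. ennreal t < c} = c"
proof -
  define a where "a = enn2real c"
  have a0: "0 \<le> a" by (simp add: a_def)
  have ca: "c = ennreal a" using c unfolding a_def by (cases c) (auto simp: top_unique)
  have aL: "a \<le> L" using c L ca by (simp add: ennreal_le_iff)
  have "{t\<in>{0..L}. ennreal t < c} = {0..<a}"
    using aL a0 unfolding ca by (auto simp: ennreal_less_iff)
  then show ?thesis using a0 ca by simp
qed

lemma dr_equi:
  fixes f :: "'a \<Rightarrow> ennreal"
  assumes fm: "finite_measure N" and f: "f \<in> borel_measurable N"
  shows "emeasure (rep_space N) {t\<in>space (rep_space N). s < decr_rearr N f t} = emeasure N {x\<in>space N. s < f x}"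
proof -
  interpret finite_measure N by fact
  let ?L = "measure N (space N)"
  let ?c = "emeasure N {x\<in>space N. s < f x}"
  have sp: "space (rep_space N) = {0..?L}" unfolding rep_space_def by simp
  have c: "?c \<le> ennreal ?L"
    using emeasure_space[of N "{x\<in>space N. s < f x}"] by (simp add: emeasure_eq_measure)
  have e: "{t\<in>space (rep_space N). s < decr_rearr N f t} = {t\<in>{0..?L}. ennreal t < ?c}"
    unfolding sp using dr_gt_iff[OF f] by auto
  have "emeasure (rep_space N) {t\<in>{0..?L}. ennreal t < ?c} = emeasure lborel {t\<in>{0..?L}. ennreal t < ?c}"
    unfolding rep_space_def by (intro emeasure_restrict_space) auto
  also have "\<dots> = ?c" by (rule leb_below[OF _ c]) simp
  finally show ?thesis unfolding e .
qed

lemma dr_cong: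
  assumes "\<And>s. emeasure M {x\<in>space M. s < f x} = emeasure N {x\<in>space N. s < g x}"
  shows "decr_rearr M f = decr_rearr N g"
  unfolding decr_rearr_def using assms by (intro ext) simp

lemma fn_zero: "function_norm M \<rho> \<Longrightarrow> f \<in> borel_measurable M \<Longrightarrow> \<rho> f = 0 \<longleftrightarrow> (AE x in M. f x = 0)"
  unfolding function_norm_def by blast
lemma fn_hom: "function_norm M \<rho> \<Longrightarrow> f \<in> borel_measurable M \<Longrightarrow> 0 \<le> a \<Longrightarrow>
    \<rho> (\<lambda>x. ennreal a * f x) = ennreal a * \<rho> f"
  unfolding function_norm_def by blast
lemma fn_tri: "function_norm M \<rho> \<Longrightarrow> f \<in> borel_measurable M \<Longrightarrow> g \<in> borel_measurable M \<Longrightarrow>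
    \<rho> (\<lambda>x. f x + g x) \<le> \<rho> f + \<rho> g"
  unfolding function_norm_def by blast
lemma fn_mono: "function_norm M \<rho> \<Longrightarrow> f \<in> borel_measurable M \<Longrightarrow> g \<in> borel_measurable M \<Longrightarrow>
    (AE x in M. g x \<le> f x) \<Longrightarrow> \<rho> g \<le> \<rho> f"
  unfolding function_norm_def by blast
lemma fn_fatou: "function_norm M \<rho> \<Longrightarrow> (\<And>n. F n \<in> borel_measurable M) \<Longrightarrow> f \<in> borel_measurable M \<Longrightarrow>
    (AE x in M. incseq (\<lambda>n. F n x) \<and> f x = (SUP n. F n x)) \<Longrightarrow> \<rho> f = (SUP n. \<rho> (F n))"
  unfolding function_norm_def by blast
lemma fn_ind: "function_norm M \<rho> \<Longrightarrow> E \<in> sets M \<Longrightarrow> emeasure M E < \<infinity> \<Longrightarrow> \<rho> (indicator E) < \<infinity>"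
  unfolding function_norm_def by blast
lemma fn_loc: "function_norm M \<rho> \<Longrightarrow> E \<in> sets M \<Longrightarrow> emeasure M E < \<infinity> \<Longrightarrow>
    (\<exists>C::real. \<forall>f\<in>borel_measurable M. (\<integral>\<^sup>+x\<in>E. f x \<partial>M) \<le> ennreal C * \<rho> f)"
  unfolding function_norm_def by blast
lemma ri_fn: "ri_function_norm M \<rho> \<Longrightarrow> function_norm M \<rho>"
  unfolding ri_function_norm_def by blast
lemma ri_eq: "ri_function_norm M \<rho> \<Longrightarrow> f \<in> borel_measurable M \<Longrightarrow> g \<in> borel_measurable M \<Longrightarrow>
    equimeasurable M f g \<Longrightarrow> \<rho> f = \<rho> g"
  unfolding ri_function_norm_def by blast

lemma push_set:
  fixes g :: "real \<Rightarrow> ennreal"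
  assumes fm: "finite_measure M" and na: "nonatomic_measure M" and L: "0 < measure M (space M)"
    and g: "g \<in> borel_measurable (rep_space M)"
  shows "emeasure M {x\<in>space M. s < g (tau M x)} = emeasure (rep_space M) {t\<in>space (rep_space M). s < g t}"
proof -
  note tm = tau_rep(1)[OF fm na L]
  have A: "{t\<in>space (rep_space M). s < g t} \<in> sets (rep_space M)"
  proof -
    have "{t\<in>space (rep_space M). s < g t} = g -` {s<..} \<inter> space (rep_space M)" by auto
    also have "\<dots> \<in> sets (rep_space M)" by (rule measurable_sets[OF g]) (intro borel_open open_greaterThan)
    finally show ?thesis .
  qed
  have "{x\<in>space M. s < g (tau M x)} = tau M -` {t\<in>space (rep_space M). s < g t} \<inter> space M"
    using measurable_space[OF tm] by auto
  also have "emeasure M \<dots> = emeasure (distr M (rep_space M) (tau M)) {t\<in>space (rep_space M). s < g t}"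
    by (rule emeasure_distr[OF tm A, symmetric])
  also have "\<dots> = emeasure (rep_space M) {t\<in>space (rep_space M). s < g t}"
    unfolding tau_rep(2)[OF fm na L] ..
  finally show ?thesis .
qed

lemma borel_rep: "h \<in> borel_measurable borel \<Longrightarrow> h \<in> borel_measurable (rep_space M)"
  unfolding rep_space_def by (rule measurable_restrict_space1) simp

lemma rep_finite: "finite_measure (rep_space M)"
  unfolding rep_space_def
  by (rule finite_measureI) (simp add: space_restrict_space emeasure_restrict_space)

lemma rep_space_space: "space (rep_space M) = {0..measure M (space M)}"
  unfolding rep_space_def by simp

lemma rep_measure_space:
  assumes "0 \<le> measure M (space M)"
  shows "measure (rep_space M) (space (rep_space M)) = measure M (space M)"
  unfolding rep_space_def using assms by (simp add: measure_restrict_space)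

lemma rep_rep:
  assumes "0 \<le> measure M (space M)"
  shows "rep_space (rep_space M) = rep_space M"
  using rep_measure_space[OF assms] unfolding rep_space_def[of "rep_space M"]
  by (simp add: rep_space_def[symmetric])

lemma tau_rep_is:
  fixes M :: "'a measure" and \<rho> :: "('a \<Rightarrow> ennreal) \<Rightarrow> ennreal"
  assumes fm: "finite_measure M" and na: "nonatomic_measure M" and L: "0 < measure M (space M)"
    and ri: "ri_function_norm M \<rho>"
  shows "is_luxemburg_rep M \<rho> (\<lambda>g. \<rho> (\<lambda>x. g (tau M x)))"
proof -
  interpret finite_measure M by fact
  let ?R = "rep_space M"
  let ?Rb = "\<lambda>g. \<rho> (\<lambda>x. g (tau M x))"
  note tm = tau_rep(1)[OF fm na L]
  note D = tau_rep(2)[OF fm na L]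
  have fn: "function_norm M \<rho>" by (rule ri_fn[OF ri])
  have cm: "(\<lambda>x. g (tau M x)) \<in> borel_measurable M" if "g \<in> borel_measurable ?R" for g :: "real \<Rightarrow> ennreal"
    using measurable_comp[OF tm that] by (simp add: comp_def)
  have AED: "AE x in M. P (tau M x)" if "AE t in ?R. P t" for P
  proof -
    have "AE t in distr M ?R (tau M). P t" using that by (simp only: D)
    then show ?thesis by (rule AE_distrD[OF tm])
  qed
  have "function_norm ?R ?Rb"
    unfolding function_norm_def
  proof (intro conjI ballI allI impI)
    fix f :: "real \<Rightarrow> ennreal" assume f: "f \<in> borel_measurable ?R"
    have "?Rb f = 0 \<longleftrightarrow> (AE x in M. f (tau M x) = 0)" by (rule fn_zero[OF fn cm[OF f]])
    also have "\<dots> \<longleftrightarrow> (AE t in distr M ?R (tau M). f t = 0)"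
    proof (rule AE_distr_iff[symmetric, OF tm])
      have "{t \<in> space ?R. f t = 0} = f -` {0} \<inter> space ?R" by auto
      also have "\<dots> \<in> sets ?R" by (rule measurable_sets[OF f]) simp
      finally show "{t \<in> space ?R. f t = 0} \<in> sets ?R" .
    qed
    also have "\<dots> \<longleftrightarrow> (AE t in ?R. f t = 0)" unfolding D ..
    finally show "?Rb f = 0 \<longleftrightarrow> (AE t in ?R. f t = 0)" .
  next
    fix f :: "real \<Rightarrow> ennreal" and a :: real assume f: "f \<in> borel_measurable ?R" and a: "0 \<le> a"
    show "?Rb (\<lambda>x. ennreal a * f x) = ennreal a * ?Rb f" by (rule fn_hom[OF fn cm[OF f] a])
  next
    fix f g :: "real \<Rightarrow> ennreal" assume f: "f \<in> borel_measurable ?R" and g: "g \<in> borel_measurable ?R"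
    show "?Rb (\<lambda>x. f x + g x) \<le> ?Rb f + ?Rb g" by (rule fn_tri[OF fn cm[OF f] cm[OF g]])
  next
    fix f g :: "real \<Rightarrow> ennreal" assume f: "f \<in> borel_measurable ?R" and g: "g \<in> borel_measurable ?R"
      and le: "AE t in ?R. g t \<le> f t"
    show "?Rb g \<le> ?Rb f" by (rule fn_mono[OF fn cm[OF f] cm[OF g] AED[OF le]])
  next
    fix F :: "nat \<Rightarrow> real \<Rightarrow> ennreal" and f :: "real \<Rightarrow> ennreal"
    assume H: "(\<forall>n. F n \<in> borel_measurable ?R) \<and> f \<in> borel_measurable ?R \<and>
        (AE t in ?R. incseq (\<lambda>n. F n t) \<and> f t = (SUP n. F n t))"
    have "AE x in M. incseq (\<lambda>n. F n (tau M x)) \<and> f (tau M x) = (SUP n. F n (tau M x))"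
      using AED[of "\<lambda>t. incseq (\<lambda>n. F n t) \<and> f t = (SUP n. F n t)"] H by simp
    then show "?Rb f = (SUP n. ?Rb (F n))"
      using H by (intro fn_fatou[OF fn, of "\<lambda>n x. F n (tau M x)"] cm) auto
  next
    fix E assume E: "E \<in> sets ?R" and fin: "emeasure ?R E < \<infinity>"
    have "?Rb (indicator E) \<le> \<rho> (indicator (space M))"
    proof (rule fn_mono[OF fn])
      show "(indicator (space M) :: 'a \<Rightarrow> ennreal) \<in> borel_measurable M" by simp
      show "(\<lambda>x. indicator E (tau M x) :: ennreal) \<in> borel_measurable M"
        by (rule cm[of "indicator E"]) (rule borel_measurable_indicator[OF E])
      show "AE x in M. indicator E (tau M x) \<le> (indicator (space M) x :: ennreal)"
        by (intro AE_I2) (auto simp: indicator_def)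
    qed
    also have "\<dots> < \<infinity>" by (rule fn_ind[OF fn]) (auto simp: less_top[symmetric] emeasure_finite)
    finally show "?Rb (indicator E) < \<infinity>" .
  next
    fix E assume E: "E \<in> sets ?R" and fin: "emeasure ?R E < \<infinity>"
    obtain C :: real where C: "\<forall>f\<in>borel_measurable M. (\<integral>\<^sup>+x\<in>space M. f x \<partial>M) \<le> ennreal C * \<rho> f"
      using fn_loc[OF fn, of "space M"] by (auto simp: less_top[symmetric] emeasure_finite)
    show "\<exists>C::real. \<forall>f\<in>borel_measurable ?R. (\<integral>\<^sup>+t\<in>E. f t \<partial>?R) \<le> ennreal C * ?Rb f"
    proof (intro exI[of _ C] ballI)
      fix f :: "real \<Rightarrow> ennreal" assume f: "f \<in> borel_measurable ?R"
      have "(\<integral>\<^sup>+t\<in>E. f t \<partial>?R) = (\<integral>\<^sup>+t. f t * indicator E t \<partial>distr M ?R (tau M))"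
        unfolding D ..
      also have "\<dots> = (\<integral>\<^sup>+x. f (tau M x) * indicator E (tau M x) \<partial>M)"
        using f E by (intro nn_integral_distr[OF tm]) (simp add: D)
      also have "\<dots> \<le> (\<integral>\<^sup>+x. f (tau M x) * indicator (space M) x \<partial>M)"
        by (intro nn_integral_mono) (auto simp: indicator_def)
      also have "\<dots> \<le> ennreal C * ?Rb f" using C cm[OF f] by auto
      finally show "(\<integral>\<^sup>+t\<in>E. f t \<partial>?R) \<le> ennreal C * ?Rb f" .
    qed
  qed
  moreover have "\<forall>f\<in>borel_measurable ?R. \<forall>g\<in>borel_measurable ?R. equimeasurable ?R f g \<longrightarrow> ?Rb f = ?Rb g"
  proof (intro ballI impI)
    fix f g :: "real \<Rightarrow> ennreal" assume f: "f \<in> borel_measurable ?R" and g: "g \<in> borel_measurable ?R"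
      and eq: "equimeasurable ?R f g"
    have "equimeasurable M (\<lambda>x. f (tau M x)) (\<lambda>x. g (tau M x))"
      using eq unfolding equimeasurable_def push_set[OF fm na L f] push_set[OF fm na L g] .
    then show "?Rb f = ?Rb g" by (rule ri_eq[OF ri cm[OF f] cm[OF g]])
  qed
  moreover have "\<forall>f\<in>borel_measurable M. \<rho> f = ?Rb (decr_rearr M f)"
  proof
    fix f :: "'a \<Rightarrow> ennreal" assume f: "f \<in> borel_measurable M"
    have drm: "decr_rearr M f \<in> borel_measurable ?R"
      by (rule borel_rep[OF dr_meas[OF f]])
    have "equimeasurable M f (\<lambda>x. decr_rearr M f (tau M x))"
      unfolding equimeasurable_def push_set[OF fm na L drm] dr_equi[OF fm f] by simp
    then show "\<rho> f = ?Rb (decr_rearr M f)" by (rule ri_eq[OF ri f cm[OF drm]])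
  qed
  ultimately show ?thesis unfolding is_luxemburg_rep_def ri_function_norm_def by (intro conjI)
qed

lemma lux_unique:
  fixes M :: "'a measure" and \<rho> :: "('a \<Rightarrow> ennreal) \<Rightarrow> ennreal"
  assumes fm: "finite_measure M" and na: "nonatomic_measure M" and L: "0 < measure M (space M)"
    and rep: "is_luxemburg_rep M \<rho> Rb" and g: "g \<in> borel_measurable (rep_space M)"
  shows "Rb g = \<rho> (\<lambda>x. g (tau M x))"
proof -
  let ?R = "rep_space M"
  have riR: "ri_function_norm ?R Rb" and rp: "\<forall>f\<in>borel_measurable M. \<rho> f = Rb (decr_rearr M f)"
    using rep unfolding is_luxemburg_rep_def by auto
  note tm = tau_rep(1)[OF fm na L]
  have cm: "(\<lambda>x. g (tau M x)) \<in> borel_measurable M"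
    using measurable_comp[OF tm g] by (simp add: comp_def)
  have gs: "decr_rearr ?R g \<in> borel_measurable ?R"
    by (rule borel_rep[OF dr_meas[OF g]])
  have "emeasure ?R {t\<in>space ?R. s < decr_rearr ?R g t} = emeasure ?R {t\<in>space ?R. s < g t}" for s
    using dr_equi[OF rep_finite g, of s] rep_rep[of M] L by simp
  then have "equimeasurable ?R g (decr_rearr ?R g)" unfolding equimeasurable_def by simp
  then have "Rb g = Rb (decr_rearr ?R g)" by (rule ri_eq[OF riR g gs])
  also have "decr_rearr ?R g = decr_rearr M (\<lambda>x. g (tau M x))"
    by (rule dr_cong) (simp add: push_set[OF fm na L g])
  also have "Rb \<dots> = \<rho> (\<lambda>x. g (tau M x))" using rp cm by simp
  finally show ?thesis .
qed

lemma lux_norm_eq: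
  fixes M :: "'a measure" and \<rho> :: "('a \<Rightarrow> ennreal) \<Rightarrow> ennreal"
  assumes fm: "finite_measure M" and na: "nonatomic_measure M" and L: "0 < measure M (space M)"
    and ri: "ri_function_norm M \<rho>"
  shows "is_luxemburg_rep M \<rho> (luxemburg_norm M \<rho>)"
    "g \<in> borel_measurable (rep_space M) \<Longrightarrow> luxemburg_norm M \<rho> g = \<rho> (\<lambda>x. g (tau M x))"
proof -
  have ex: "\<exists>Rb. is_luxemburg_rep M \<rho> Rb" using tau_rep_is[OF fm na L ri] by blast
  show r: "is_luxemburg_rep M \<rho> (luxemburg_norm M \<rho>)"
    unfolding luxemburg_norm_def by (rule someI_ex[OF ex])
  show "g \<in> borel_measurable (rep_space M) \<Longrightarrow> luxemburg_norm M \<rho> g = \<rho> (\<lambda>x. g (tau M x))"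
    by (rule lux_unique[OF fm na L r])
qed

lemma restrict_basic:
  assumes fm: "finite_measure M" and na: "nonatomic_measure M"
    and O: "\<Omega> \<in> sets M" and pos: "0 < emeasure M \<Omega>"
  shows "finite_measure (restrict_space M \<Omega>)" "nonatomic_measure (restrict_space M \<Omega>)"
    "measure (restrict_space M \<Omega>) (space (restrict_space M \<Omega>)) = measure M \<Omega>"
    "0 < measure M \<Omega>" "measure M \<Omega> \<le> measure M (space M)"
proof -
  interpret finite_measure M by fact
  have OM: "\<Omega> \<inter> space M \<in> sets M" using O by auto
  show "finite_measure (restrict_space M \<Omega>)" by (rule finite_measure_restrict_space[OF fm O])
  show "nonatomic_measure (restrict_space M \<Omega>)"
    unfolding nonatomic_measure_def
  proof (intro ballI impI)
    fix A assume A: "A \<in> sets (restrict_space M \<Omega>)" and p: "0 < emeasure (restrict_space M \<Omega>) A"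
    have A2: "A \<subseteq> \<Omega>" "A \<in> sets M" using A sets_restrict_space_iff[OF OM] by auto
    have eA: "emeasure (restrict_space M \<Omega>) A = emeasure M A" by (rule emeasure_restrict_space[OF OM A2(1)])
    obtain B where B: "B \<in> sets M" "B \<subseteq> A" "0 < emeasure M B" "emeasure M B < emeasure M A"
      using na A2 p eA unfolding nonatomic_measure_def by auto
    have "B \<in> sets (restrict_space M \<Omega>)" using B A2 sets_restrict_space_iff[OF OM] by auto
    moreover have "emeasure (restrict_space M \<Omega>) B = emeasure M B"
      using B A2 by (intro emeasure_restrict_space[OF OM]) auto
    ultimately show "\<exists>B\<in>sets (restrict_space M \<Omega>). B \<subseteq> A \<and> 0 < emeasure (restrict_space M \<Omega>) B \<and>
        emeasure (restrict_space M \<Omega>) B < emeasure (restrict_space M \<Omega>) A"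
      using B eA by auto
  qed
  show "measure (restrict_space M \<Omega>) (space (restrict_space M \<Omega>)) = measure M \<Omega>"
    using O by (simp add: measure_restrict_space[OF OM])
  show "0 < measure M \<Omega>" using pos by (simp add: emeasure_eq_measure)
  show "measure M \<Omega> \<le> measure M (space M)" using O sets.sets_into_space[OF O] by (intro finite_measure_mono) auto
qed

definition ext0 :: "real \<Rightarrow> (real \<Rightarrow> ennreal) \<Rightarrow> real \<Rightarrow> ennreal" where
  "ext0 c g t = indicator {0..c} t * g t"

lemma ext0_meas:
  assumes g: "g \<in> borel_measurable (restrict_space lborel {0..c})"
  shows "ext0 c g \<in> borel_measurable borel"
proof -
  have "(\<lambda>x. if x \<in> {0..c} then g x else 0) \<in> borel_measurable lborel"
    using measurable_restrict_space_iff[of "{0..c}" lborel 0 borel g] g by simp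
  moreover have "(\<lambda>x. if x \<in> {0..c} then g x else 0) = ext0 c g"
    by (auto simp: ext0_def fun_eq_iff indicator_def)
  ultimately show ?thesis by simp
qed

lemma lux_rel:
  fixes M :: "'a measure" and \<rho> :: "('a \<Rightarrow> ennreal) \<Rightarrow> ennreal" and g :: "real \<Rightarrow> ennreal"
  assumes fm: "finite_measure M" and na: "nonatomic_measure M"
    and O: "\<Omega> \<in> sets M" and pos: "0 < emeasure M \<Omega>" and ri: "ri_function_norm M \<rho>"
    and g: "g \<in> borel_measurable (rep_space (restrict_space M \<Omega>))"
  shows "luxemburg_norm (restrict_space M \<Omega>) (restrict_norm \<Omega> \<rho>) g =
         luxemburg_norm M \<rho> (ext0 (measure M \<Omega>) g)"
proof -
  let ?N = "restrict_space M \<Omega>"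
  let ?l = "measure M \<Omega>" and ?L = "measure M (space M)"
  note rb = restrict_basic[OF fm na O pos]
  have OM: "\<Omega> \<inter> space M \<in> sets M" using O by auto
  have L: "0 < ?L" using rb by linarith
  have riN: "ri_function_norm ?N (restrict_norm \<Omega> \<rho>)" by (rule restrict_ri[OF O ri])
  have LN: "0 < measure ?N (space ?N)" using rb by simp
  have repN: "rep_space ?N = restrict_space lborel {0..?l}" unfolding rep_space_def using rb by simp
  have Gb: "ext0 ?l g \<in> borel_measurable borel" using g unfolding repN by (rule ext0_meas)
  have G: "ext0 ?l g \<in> borel_measurable (rep_space M)" by (rule borel_rep[OF Gb])
  have e1: "luxemburg_norm ?N (restrict_norm \<Omega> \<rho>) g = \<rho> (\<lambda>x. indicator \<Omega> x * g (tau ?N x))"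
    using lux_norm_eq(2)[OF rb(1) rb(2) LN riN g] by (simp add: restrict_norm_def)
  have e2: "luxemburg_norm M \<rho> (ext0 ?l g) = \<rho> (\<lambda>x. ext0 ?l g (tau M x))"
    by (rule lux_norm_eq(2)[OF fm na L ri G])
  have tmN: "tau ?N \<in> measurable ?N (rep_space ?N)" by (rule tau_rep(1)[OF rb(1) rb(2) LN])
  have m1: "(\<lambda>x. g (tau ?N x)) \<in> borel_measurable ?N"
    using measurable_comp[OF tmN g] by (simp add: comp_def)
  have m1': "(\<lambda>x. indicator \<Omega> x * g (tau ?N x)) \<in> borel_measurable M" by (rule chi_meas[OF O m1])
  have tmM: "tau M \<in> measurable M (rep_space M)" by (rule tau_rep(1)[OF fm na L])
  have m2: "(\<lambda>x. ext0 ?l g (tau M x)) \<in> borel_measurable M"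
    using measurable_comp[OF tmM G] by (simp add: comp_def)
  have leb_eq: "emeasure (restrict_space lborel {0..c}) {t\<in>space (restrict_space lborel {0..c}). P t}
      = emeasure lborel {t\<in>{0..c}. P t}" if "{t\<in>{0..c}. P t} \<in> sets borel" for c :: real and P
    using that by (subst emeasure_restrict_space) auto
  have "equimeasurable M (\<lambda>x. indicator \<Omega> x * g (tau ?N x)) (\<lambda>x. ext0 ?l g (tau M x))"
    unfolding equimeasurable_def
  proof
    fix s :: ennreal
    have "{x\<in>space M. s < indicator \<Omega> x * g (tau ?N x)} = {x\<in>space ?N. s < g (tau ?N x)}"
      using O sets.sets_into_space[OF O] by (auto simp: indicator_def)
    then have "emeasure M {x\<in>space M. s < indicator \<Omega> x * g (tau ?N x)} = emeasure ?N {x\<in>space ?N. s < g (tau ?N x)}"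
      using emeasure_restrict_space[OF OM, of "{x\<in>space ?N. s < g (tau ?N x)}"] O by auto
    also have "\<dots> = emeasure (rep_space ?N) {t\<in>space (rep_space ?N). s < g t}"
      by (rule push_set[OF rb(1) rb(2) LN g])
    also have "\<dots> = emeasure (rep_space M) {t\<in>space (rep_space M). s < ext0 ?l g t}"
    proof -
      have A: "{t\<in>{0..?l}. s < ext0 ?l g t} \<in> sets borel"
      proof -
        have "{t\<in>{0..?l}. s < ext0 ?l g t} = (ext0 ?l g -` {s<..} \<inter> space borel) \<inter> {0..?l}" by auto
        also have "\<dots> \<in> sets borel"
        proof (rule sets.Int)
          have "{s<..} \<in> sets borel" by (rule borel_open) simp
          then show "ext0 ?l g -` {s<..} \<inter> space borel \<in> sets borel" by (rule measurable_sets[OF Gb])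
        qed simp
        finally show ?thesis .
      qed
      have s1: "{t\<in>space (rep_space ?N). s < g t} = {t\<in>space (restrict_space lborel {0..?l}). s < ext0 ?l g t}"
        unfolding repN by (auto simp: ext0_def)
      have s2: "{t\<in>space (rep_space M). s < ext0 ?l g t} = {t\<in>space (restrict_space lborel {0..?L}). s < ext0 ?l g t}"
        unfolding rep_space_def ..
      have s3: "{t\<in>{0..?L}. s < ext0 ?l g t} = {t\<in>{0..?l}. s < ext0 ?l g t}"
        using rb(5) by (auto simp: ext0_def indicator_def)
      have A': "{t\<in>{0..?L}. s < ext0 ?l g t} \<in> sets borel" using A s3 by simp
      have "emeasure (rep_space ?N) {t\<in>space (rep_space ?N). s < g t} =
          emeasure (restrict_space lborel {0..?l}) {t\<in>space (restrict_space lborel {0..?l}). s < ext0 ?l g t}"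
        using s1 repN by simp
      also have "\<dots> = emeasure lborel {t\<in>{0..?l}. s < ext0 ?l g t}" by (rule leb_eq[OF A])
      also have "\<dots> = emeasure lborel {t\<in>{0..?L}. s < ext0 ?l g t}" unfolding s3 ..
      also have "\<dots> = emeasure (rep_space M) {t\<in>space (rep_space M). s < ext0 ?l g t}"
        unfolding s2 unfolding rep_space_def by (rule leb_eq[OF A', symmetric])
      finally show ?thesis .
    qed
    also have "\<dots> = emeasure M {x\<in>space M. s < ext0 ?l g (tau M x)}"
      by (rule push_set[OF fm na L G, symmetric])
    finally show "emeasure M {x\<in>space M. s < indicator \<Omega> x * g (tau ?N x)} =
        emeasure M {x\<in>space M. s < ext0 ?l g (tau M x)}" .
  qed
  then have "\<rho> (\<lambda>x. indicator \<Omega> x * g (tau ?N x)) = \<rho> (\<lambda>x. ext0 ?l g (tau M x))"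
    by (rule ri_eq[OF ri m1' m2])
  then show ?thesis using e1 e2 by simp
qed

lemma ind_equi:
  assumes E: "E \<in> sets M" and F: "F \<in> sets M" and eq: "emeasure M E = emeasure M F"
  shows "equimeasurable M (indicator E) (indicator F)"
  unfolding equimeasurable_def
proof
  fix s :: ennreal
  have eE: "{x\<in>space M. s < (indicator E x :: ennreal)} = (if s < 1 then E else {})"
    using sets.sets_into_space[OF E] by (auto simp: indicator_def)
  have eF: "{x\<in>space M. s < (indicator F x :: ennreal)} = (if s < 1 then F else {})"
    using sets.sets_into_space[OF F] by (auto simp: indicator_def)
  show "emeasure M {x\<in>space M. s < indicator E x} = emeasure M {x\<in>space M. s < indicator F x}"
    unfolding eE eF using eq by simp
qed

lemma ff_eq:
  fixes M :: "'a measure" and \<rho> :: "('a \<Rightarrow> ennreal) \<Rightarrow> ennreal"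
  assumes fm: "finite_measure M" and na: "nonatomic_measure M"
    and O: "\<Omega> \<in> sets M" and pos: "0 < emeasure M \<Omega>" and ri: "ri_function_norm M \<rho>"
    and t: "t \<le> measure M \<Omega>"
  shows "fundamental_fn M \<rho> t = fundamental_fn (restrict_space M \<Omega>) (restrict_norm \<Omega> \<rho>) t"
proof -
  interpret finite_measure M by fact
  let ?N = "restrict_space M \<Omega>"
  have OM: "\<Omega> \<inter> space M \<in> sets M" using O by auto
  note rb = restrict_basic[OF fm na O pos]
  have mt: "0 \<le> max 0 t" "max 0 t \<le> measure M \<Omega>" using t rb(4) by auto
  obtain E0 where E0: "E0 \<in> sets M" "E0 \<subseteq> \<Omega>" "measure M E0 = max 0 t"
    using sierpinski[OF fm na O mt] by blast
  have eE0: "emeasure M E0 = ennreal t"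
    using E0 by (simp add: emeasure_eq_measure ennreal_max_0)
  define c where "c = enn2real (\<rho> (indicator E0))"
  have fn: "function_norm M \<rho>" by (rule ri_fn[OF ri])
  have same: "\<rho> (indicator E) = \<rho> (indicator E0)" if E: "E \<in> sets M" "emeasure M E = ennreal t" for E
  proof (rule ri_eq[OF ri])
    show "indicator E \<in> borel_measurable M" using E(1) by simp
    show "indicator E0 \<in> borel_measurable M" using E0(1) by simp
    show "equimeasurable M (indicator E) (indicator E0)"
      by (rule ind_equi[OF E(1) E0(1)]) (simp add: E(2) eE0)
  qed
  have Pm: "(\<exists>E\<in>sets M. emeasure M E = ennreal t \<and> enn2real (\<rho> (indicator E)) = v) \<longleftrightarrow> v = c" for v
  proof
    assume "\<exists>E\<in>sets M. emeasure M E = ennreal t \<and> enn2real (\<rho> (indicator E)) = v"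
    then obtain E where "E \<in> sets M" "emeasure M E = ennreal t" "enn2real (\<rho> (indicator E)) = v" by blast
    then show "v = c" using same unfolding c_def by metis
  next
    assume "v = c"
    then show "\<exists>E\<in>sets M. emeasure M E = ennreal t \<and> enn2real (\<rho> (indicator E)) = v"
      using E0(1) eE0 unfolding c_def by (intro bexI[of _ E0]) auto
  qed
  have Pn: "(\<exists>E\<in>sets ?N. emeasure ?N E = ennreal t \<and> enn2real (restrict_norm \<Omega> \<rho> (indicator E)) = v) \<longleftrightarrow> v = c" for v
  proof
    assume "\<exists>E\<in>sets ?N. emeasure ?N E = ennreal t \<and> enn2real (restrict_norm \<Omega> \<rho> (indicator E)) = v"
    then obtain E where E: "E \<in> sets ?N" "emeasure ?N E = ennreal t" "enn2real (restrict_norm \<Omega> \<rho> (indicator E)) = v"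
      by blast
    have E2: "E \<subseteq> \<Omega>" "E \<in> sets M" using E(1) sets_restrict_space_iff[OF OM] by auto
    have "emeasure M E = ennreal t" using E(2) emeasure_restrict_space[OF OM E2(1)] by simp
    moreover have "restrict_norm \<Omega> \<rho> (indicator E) = \<rho> (indicator E)"
    proof -
      have "(\<lambda>x. indicator \<Omega> x * indicator E x) = (indicator E :: 'a \<Rightarrow> ennreal)"
        using E2 by (auto simp: indicator_def fun_eq_iff)
      then show ?thesis by (simp add: restrict_norm_def)
    qed
    ultimately have "\<rho> (indicator E) = \<rho> (indicator E0)" "restrict_norm \<Omega> \<rho> (indicator E) = \<rho> (indicator E)"
      using same[OF E2(2)] by auto
    then show "v = c" using E(3) unfolding c_def by simp
  next
    assume v: "v = c"
    have "E0 \<in> sets ?N" using E0 sets_restrict_space_iff[OF OM] by auto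
    moreover have "emeasure ?N E0 = ennreal t" using emeasure_restrict_space[OF OM E0(2)] eE0 by simp
    moreover have "restrict_norm \<Omega> \<rho> (indicator E0) = \<rho> (indicator E0)"
    proof -
      have "(\<lambda>x. indicator \<Omega> x * indicator E0 x) = (indicator E0 :: 'a \<Rightarrow> ennreal)"
        using E0 by (auto simp: indicator_def fun_eq_iff)
      then show ?thesis by (simp add: restrict_norm_def)
    qed
    ultimately show "\<exists>E\<in>sets ?N. emeasure ?N E = ennreal t \<and> enn2real (restrict_norm \<Omega> \<rho> (indicator E)) = v"
      using v unfolding c_def by (intro bexI[of _ E0]) auto
  qed
  have "fundamental_fn M \<rho> t = c" unfolding fundamental_fn_def Pm by simp
  moreover have "fundamental_fn ?N (restrict_norm \<Omega> \<rho>) t = c" unfolding fundamental_fn_def Pn by simp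
  ultimately show ?thesis by simp
qed

lemma zippin_eq:
  fixes M :: "'a measure" and \<rho> :: "('a \<Rightarrow> ennreal) \<Rightarrow> ennreal"
  assumes fm: "finite_measure M" and na: "nonatomic_measure M"
    and O: "\<Omega> \<in> sets M" and pos: "0 < emeasure M \<Omega>" and ri: "ri_function_norm M \<rho>"
  shows "zippin_lower M \<rho> = zippin_lower (restrict_space M \<Omega>) (restrict_norm \<Omega> \<rho>)"
    "zippin_upper M \<rho> = zippin_upper (restrict_space M \<Omega>) (restrict_norm \<Omega> \<rho>)"
proof -
  let ?N = "restrict_space M \<Omega>"
  let ?l = "measure M \<Omega>"
  note rb = restrict_basic[OF fm na O pos]
  have zM: "zippin_M M \<rho> x = zippin_M ?N (restrict_norm \<Omega> \<rho>) x" for x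
    unfolding zippin_M_def
  proof (rule Limsup_eq)
    have b: "0 < ?l / (\<bar>x\<bar> + 1)" using rb by simp
    show "\<forall>\<^sub>F t in at_right 0. ereal (fundamental_fn M \<rho> (x * t) / fundamental_fn M \<rho> t) =
        ereal (fundamental_fn ?N (restrict_norm \<Omega> \<rho>) (x * t) / fundamental_fn ?N (restrict_norm \<Omega> \<rho>) t)"
      unfolding eventually_at_right_field
    proof (intro exI[of _ "?l / (\<bar>x\<bar> + 1)"] conjI allI impI)
      show "0 < ?l / (\<bar>x\<bar> + 1)" by (rule b)
      fix t :: real assume t0: "0 < t" and tb: "t < ?l / (\<bar>x\<bar> + 1)"
      have "t * (\<bar>x\<bar> + 1) < ?l" using tb by (simp add: field_simps)
      then have e: "t * \<bar>x\<bar> + t < ?l" by (simp add: algebra_simps)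
      have a: "0 \<le> t * \<bar>x\<bar>" using t0 by simp
      have b: "t * x \<le> t * \<bar>x\<bar>" by (rule mult_left_mono) (use t0 in auto)
      have t1: "t \<le> ?l" using e a by linarith
      have t2: "x * t \<le> ?l"
      proof -
        have "x * t = t * x" by simp
        also have "\<dots> \<le> t * \<bar>x\<bar>" by (rule b)
        also have "\<dots> \<le> ?l" using e t0 by linarith
        finally show ?thesis .
      qed
      show "ereal (fundamental_fn M \<rho> (x * t) / fundamental_fn M \<rho> t) =
        ereal (fundamental_fn ?N (restrict_norm \<Omega> \<rho>) (x * t) / fundamental_fn ?N (restrict_norm \<Omega> \<rho>) t)"
        using ff_eq[OF fm na O pos ri t1] ff_eq[OF fm na O pos ri t2] by simp
    qed
  qed
  show "zippin_lower M \<rho> = zippin_lower ?N (restrict_norm \<Omega> \<rho>)"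
    unfolding zippin_lower_def zM ..
  show "zippin_upper M \<rho> = zippin_upper ?N (restrict_norm \<Omega> \<rho>)"
    unfolding zippin_upper_def zM ..
qed

lemma dil_ext: "dilation c s g = (\<lambda>t. ext0 c g (s * t))"
  by (auto simp: dilation_def ext0_def fun_eq_iff indicator_def)

lemma borel_restr: "h \<in> borel_measurable borel \<Longrightarrow> h \<in> borel_measurable (restrict_space lborel S)"
  by (rule measurable_restrict_space1) simp

lemma dil_meas:
  assumes g: "g \<in> borel_measurable (restrict_space lborel {0..c})"
  shows "dilation c s g \<in> borel_measurable borel"
proof -
  have [measurable]: "ext0 c g \<in> borel_measurable borel" by (rule ext0_meas[OF g])
  show ?thesis unfolding dil_ext by measurable
qed

lemma lborel_shift:
  assumes B: "B \<in> sets borel"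
  shows "emeasure lborel {t::real. t + c \<in> B} = emeasure lborel B"
proof -
  have "emeasure (distr lborel borel ((+) c)) B = emeasure lborel ((+) c -` B \<inter> space lborel)"
    using B by (intro emeasure_distr) auto
  then have "emeasure lborel B = emeasure lborel ((+) c -` B)" by (simp add: lborel_distr_plus)
  moreover have "(+) c -` B = {t. t + c \<in> B}" by (auto simp: add.commute)
  ultimately show ?thesis by simp
qed

locale boyd_setup =
  fixes L l :: real and RL :: "(real \<Rightarrow> ennreal) \<Rightarrow> ennreal"
  assumes l0: "0 < l" and lL: "l \<le> L"
    and riL: "ri_function_norm (restrict_space lborel {0..L}) RL"
begin

abbreviation "RS \<equiv> restrict_space lborel {0..L}"
abbreviation "Rl \<equiv> restrict_space lborel {0..l}"

lemma fnL: "function_norm RS RL" by (rule ri_fn[OF riL])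

lemma spRS: "space RS = {0..L}" by simp

lemma RL_mono:
  fixes f g :: "real \<Rightarrow> ennreal"
  assumes f: "f \<in> borel_measurable borel" and g: "g \<in> borel_measurable borel"
    and le: "\<And>t. 0 \<le> t \<Longrightarrow> t \<le> L \<Longrightarrow> g t \<le> f t"
  shows "RL g \<le> RL f"
  by (rule fn_mono[OF fnL borel_restr[OF f] borel_restr[OF g]]) (intro AE_I2, use le in auto)

lemma RL_cong:
  fixes f g :: "real \<Rightarrow> ennreal"
  assumes f: "f \<in> borel_measurable borel" and g: "g \<in> borel_measurable borel"
    and eq: "\<And>t. 0 \<le> t \<Longrightarrow> t \<le> L \<Longrightarrow> g t = f t"
  shows "RL g = RL f"
  using RL_mono[OF f g] RL_mono[OF g f] eq by (metis order.antisym order.refl)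

lemma RL_mono':
  fixes f g :: "real \<Rightarrow> ennreal"
  assumes f: "f \<in> borel_measurable RS" and g: "g \<in> borel_measurable RS"
    and le: "\<And>t. 0 \<le> t \<Longrightarrow> t \<le> L \<Longrightarrow> g t \<le> f t"
  shows "RL g \<le> RL f"
  by (rule fn_mono[OF fnL f g]) (intro AE_I2, use le in auto)

lemma RL_sum:
  fixes f :: "nat \<Rightarrow> real \<Rightarrow> ennreal" and n :: nat
  assumes f: "\<And>k. f k \<in> borel_measurable borel"
  shows "RL (\<lambda>t. \<Sum>k<n. f k t) \<le> (\<Sum>k<n. RL (f k))"
proof (induction n)
  case 0
  have "RL (\<lambda>t. 0) = RL (\<lambda>t. ennreal 0 * 0)" by simp
  also have "\<dots> = ennreal 0 * RL (\<lambda>t. 0)" by (rule fn_hom[OF fnL]) auto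
  finally show ?case by simp
next
  case (Suc n)
  have m: "(\<lambda>t. \<Sum>k<n. f k t) \<in> borel_measurable RS" using f by (intro borel_restr) measurable
  have "RL (\<lambda>t. \<Sum>k<Suc n. f k t) = RL (\<lambda>t. (\<Sum>k<n. f k t) + f n t)" by simp
  also have "\<dots> \<le> RL (\<lambda>t. \<Sum>k<n. f k t) + RL (f n)"
    by (rule fn_tri[OF fnL m borel_restr[OF f]])
  also have "\<dots> \<le> (\<Sum>k<n. RL (f k)) + RL (f n)" using Suc by (intro add_right_mono)
  finally show ?case by simp
qed

lemma leb_RS:
  assumes "{t\<in>{0..L}. P t} \<in> sets borel"
  shows "emeasure RS {t\<in>space RS. P t} = emeasure lborel {t\<in>{0..L}. P t}"
  using assms by (subst emeasure_restrict_space) auto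

lemma sup_set_borel:
  fixes f :: "real \<Rightarrow> ennreal" and s :: ennreal
  assumes f: "f \<in> borel_measurable borel"
  shows "{t. s < f t} \<in> sets borel"
proof -
  have "{s<..} \<in> sets (borel :: ennreal measure)" by (rule borel_open) simp
  then have "f -` {s<..} \<inter> space borel \<in> sets borel" by (rule measurable_sets[OF f])
  then show ?thesis by (simp add: vimage_def)
qed

lemma shift_right:
  fixes f :: "real \<Rightarrow> ennreal"
  assumes f: "f \<in> borel_measurable borel" and neg: "\<And>u. u < 0 \<Longrightarrow> f u = 0" and a: "0 \<le> a"
  shows "RL (\<lambda>t. f (t - a)) \<le> RL f"
proof -
  have [measurable]: "f \<in> borel_measurable borel" by (rule f)
  let ?F = "\<lambda>t. f (t - a)"
  let ?G = "\<lambda>t. indicator {..L - a} t * f t"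
  have Fm: "?F \<in> borel_measurable borel" by measurable
  have Gm: "?G \<in> borel_measurable borel" by measurable
  have "equimeasurable RS ?F ?G"
    unfolding equimeasurable_def
  proof
    fix s :: ennreal
    define U where "U = {u. 0 \<le> u \<and> u \<le> L - a \<and> s < f u}"
    have Ub: "U \<in> sets borel"
    proof -
      have "U = {u. s < f u} \<inter> {0..L - a}" unfolding U_def by auto
      then show ?thesis using sup_set_borel[OF f, of s] by auto
    qed
    have pos: "0 \<le> u" if "s < f u" for u
      using neg[of u] that by (cases "u < 0") auto
    have e1: "{t\<in>{0..L}. s < ?F t} = {t. t + (- a) \<in> U}"
      unfolding U_def using a pos by (auto simp: algebra_simps) (metis add.commute diff_ge_0_iff_ge pos)
    have e2: "{t\<in>{0..L}. s < ?G t} = U"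
      unfolding U_def using a pos by (auto simp: indicator_def)
    have "emeasure RS {t\<in>space RS. s < ?F t} = emeasure lborel {t\<in>{0..L}. s < ?F t}"
      by (rule leb_RS) (simp add: e1 sup_set_borel[OF Fm] )
    also have "\<dots> = emeasure lborel U" unfolding e1 by (rule lborel_shift[OF Ub])
    also have "\<dots> = emeasure lborel {t\<in>{0..L}. s < ?G t}" unfolding e2 ..
    also have "\<dots> = emeasure RS {t\<in>space RS. s < ?G t}"
      by (rule leb_RS[symmetric]) (simp add: e2 Ub)
    finally show "emeasure RS {t\<in>space RS. s < ?F t} = emeasure RS {t\<in>space RS. s < ?G t}" .
  qed
  then have "RL ?F = RL ?G" by (rule ri_eq[OF riL borel_restr[OF Fm] borel_restr[OF Gm]])
  also have "\<dots> \<le> RL f" by (rule RL_mono[OF f Gm]) (auto simp: indicator_def)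
  finally show ?thesis .
qed

lemma shift_left:
  fixes g :: "real \<Rightarrow> ennreal"
  assumes g: "g \<in> borel_measurable borel" and a: "0 \<le> a"
  shows "RL (\<lambda>v. indicator {..L - a} v * g (v + a)) \<le> RL g"
proof -
  have [measurable]: "g \<in> borel_measurable borel" by (rule g)
  let ?F = "\<lambda>v. indicator {..L - a} v * g (v + a)"
  let ?G = "\<lambda>t. indicator {a..} t * g t"
  have Fm: "?F \<in> borel_measurable borel" by measurable
  have Gm: "?G \<in> borel_measurable borel" by measurable
  have "equimeasurable RS ?F ?G"
    unfolding equimeasurable_def
  proof
    fix s :: ennreal
    define W where "W = {w. a \<le> w \<and> w \<le> L \<and> s < g w}"
    have Wb: "W \<in> sets borel"
    proof -
      have "W = {u. s < g u} \<inter> {a..L}" unfolding W_def by auto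
      then show ?thesis using sup_set_borel[OF g, of s] by auto
    qed
    have e1: "{t\<in>{0..L}. s < ?F t} = {t. t + a \<in> W}"
      unfolding W_def using a by (auto simp: indicator_def)
    have e2: "{t\<in>{0..L}. s < ?G t} = W"
      unfolding W_def using a by (auto simp: indicator_def)
    have "emeasure RS {t\<in>space RS. s < ?F t} = emeasure lborel {t\<in>{0..L}. s < ?F t}"
      by (rule leb_RS) (simp add: e1 sup_set_borel[OF Fm])
    also have "\<dots> = emeasure lborel W" unfolding e1 by (rule lborel_shift[OF Wb])
    also have "\<dots> = emeasure lborel {t\<in>{0..L}. s < ?G t}" unfolding e2 ..
    also have "\<dots> = emeasure RS {t\<in>space RS. s < ?G t}"
      by (rule leb_RS[symmetric]) (simp add: e2 Wb)
    finally show "emeasure RS {t\<in>space RS. s < ?F t} = emeasure RS {t\<in>space RS. s < ?G t}" .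
  qed
  then have "RL ?F = RL ?G" by (rule ri_eq[OF riL borel_restr[OF Fm] borel_restr[OF Gm]])
  also have "\<dots> \<le> RL g" by (rule RL_mono[OF g Gm]) (auto simp: indicator_def)
  finally show ?thesis .
qed

end

lemma ext0_borel: "h \<in> borel_measurable borel \<Longrightarrow> ext0 c h \<in> borel_measurable borel"
  unfolding ext0_def by measurable

lemma ext0_neg: "u < 0 \<Longrightarrow> ext0 c h u = 0"
  by (simp add: ext0_def indicator_def)

lemma ext0_le: "ext0 c h t \<le> h t"
  by (simp add: ext0_def indicator_def)

lemma ext0_ext0: "c \<le> d \<Longrightarrow> ext0 d (ext0 c h) = ext0 c h"
  by (auto simp: ext0_def indicator_def fun_eq_iff)

context boyd_setup
begin

definition hL :: "real \<Rightarrow> ennreal" where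
  "hL x = (SUP g\<in>{g \<in> borel_measurable RS. RL g \<le> 1}. RL (dilation L (1/x) g))"

definition hl :: "real \<Rightarrow> ennreal" where
  "hl x = (SUP g\<in>{g \<in> borel_measurable Rl. RL (ext0 l g) \<le> 1}. RL (ext0 l (dilation l (1/x) g)))"

lemma hl_le_hL:
  assumes x: "0 < x"
  shows "hl x \<le> hL x"
  unfolding hl_def
proof (rule SUP_least)
  fix g assume "g \<in> {g \<in> borel_measurable Rl. RL (ext0 l g) \<le> 1}"
  then have g: "g \<in> borel_measurable Rl" and g1: "RL (ext0 l g) \<le> 1" by auto
  let ?s = "1/x"
  define G where "G = ext0 l g"
  have Gb: "G \<in> borel_measurable borel" unfolding G_def by (rule ext0_meas[OF g])
  have GS: "G \<in> borel_measurable RS" by (rule borel_restr[OF Gb])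
  have G1: "RL G \<le> 1" using g1 by (simp add: G_def)
  have m1: "ext0 l (dilation l ?s g) \<in> borel_measurable borel" by (intro ext0_borel dil_meas[OF g])
  have m2: "dilation L ?s G \<in> borel_measurable borel" by (intro dil_meas borel_restr[OF Gb])
  have "RL (ext0 l (dilation l ?s g)) \<le> RL (dilation L ?s G)"
  proof (rule RL_mono[OF m2 m1])
    fix t :: real
    have "ext0 l (dilation l ?s g) t \<le> dilation l ?s g t" by (rule ext0_le)
    also have "\<dots> = dilation L ?s G t"
      unfolding dil_ext G_def ext0_ext0[OF lL] ..
    finally show "ext0 l (dilation l ?s g) t \<le> dilation L ?s G t" .
  qed
  also have "\<dots> \<le> hL x" unfolding hL_def using GS G1 by (intro SUP_upper) auto
  finally show "RL (ext0 l (dilation l ?s g)) \<le> hL x" .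
qed

lemma hL_le:
  assumes x: "0 < x"
  shows "hL x \<le> of_nat (nat \<lfloor>L / l\<rfloor> + 1) * hl x"
  unfolding hL_def
proof (rule SUP_least)
  let ?N = "nat \<lfloor>L / l\<rfloor> + 1"
  fix g assume "g \<in> {g \<in> borel_measurable RS. RL g \<le> 1}"
  then have g: "g \<in> borel_measurable RS" and g1: "RL g \<le> 1" by auto
  define s where "s = 1 / x"
  have s0: "0 < s" using x by (simp add: s_def)
  define c where "c = l * min 1 x"
  have c0: "0 < c" using x l0 by (simp add: c_def)
  have cl: "c \<le> l" using l0 by (simp add: c_def mult_left_le)
  have scl: "s * c \<le> l"
  proof -
    have "s * c = l * min s 1" using x unfolding s_def c_def min_def by (auto simp: field_simps)
    also have "\<dots> \<le> l" using l0 by (simp add: mult_left_le)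
    finally show ?thesis .
  qed
  define G where "G = ext0 L g"
  have Gb: "G \<in> borel_measurable borel" unfolding G_def by (rule ext0_meas[OF g])
  have [measurable]: "G \<in> borel_measurable borel" by (rule Gb)
  have GS: "G \<in> borel_measurable RS" by (rule borel_restr[OF Gb])
  have G1: "RL G \<le> 1"
  proof -
    have "RL G \<le> RL g" by (rule RL_mono'[OF g GS]) (simp add: G_def ext0_le)
    then show ?thesis using g1 by simp
  qed
  have Gout: "G v = 0" if "L < v" for v using that by (simp add: G_def ext0_def indicator_def)
  have dGg: "dilation L s g = dilation L s G"
    unfolding dil_ext G_def ext0_ext0[OF order.refl] ..
  define gk where "gk k = (\<lambda>v. G (v + s * real k * c))" for k :: nat
  have gkb: "gk k \<in> borel_measurable borel" for k unfolding gk_def by measurable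
  have gk1: "RL (ext0 l (gk k)) \<le> 1" for k
  proof -
    let ?a = "s * real k * c"
    have a0: "0 \<le> ?a" using s0 c0 by simp
    have m: "(\<lambda>v. indicator {..L - ?a} v * G (v + ?a)) \<in> borel_measurable borel" by measurable
    have "RL (ext0 l (gk k)) \<le> RL (\<lambda>v. indicator {..L - ?a} v * G (v + ?a))"
    proof (rule RL_mono[OF m ext0_borel[OF gkb]])
      fix t :: real
      show "ext0 l (gk k) t \<le> indicator {..L - ?a} t * G (t + ?a)"
      proof (cases "t \<le> L - ?a")
        case True then show ?thesis using ext0_le[of l "gk k" t] by (simp add: gk_def)
      next
        case False then have "G (t + ?a) = 0" by (intro Gout) simp
        then show ?thesis by (simp add: ext0_def gk_def)
      qed
    qed
    also have "\<dots> \<le> RL G" by (rule shift_left[OF Gb a0])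
    finally show ?thesis using G1 by simp
  qed
  define Fk where "Fk k = ext0 l (dilation l s (gk k))" for k
  have Fkb: "Fk k \<in> borel_measurable borel" for k
    unfolding Fk_def by (intro ext0_borel dil_meas borel_restr gkb)
  have Fk_hl: "RL (Fk k) \<le> hl x" for k
    unfolding hl_def Fk_def s_def using gk1[of k] borel_restr[OF gkb[of k]]
    by (intro SUP_upper) auto
  define pc where "pc k = (\<lambda>t. Fk k (t - real k * c))" for k :: nat
  have pcb: "pc k \<in> borel_measurable borel" for k
  proof -
    have [measurable]: "Fk k \<in> borel_measurable borel" by (rule Fkb)
    show ?thesis unfolding pc_def by measurable
  qed
  have pc_le: "RL (pc k) \<le> hl x" for k
  proof -
    have "RL (pc k) \<le> RL (Fk k)" unfolding pc_def
      by (rule shift_right[OF Fkb]) (use c0 in \<open>auto simp: Fk_def ext0_neg\<close>)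
    then show ?thesis using Fk_hl[of k] by simp
  qed
  have mS: "(\<lambda>t. \<Sum>k<?N. pc k t) \<in> borel_measurable borel" using pcb by measurable
  have mD: "dilation L s G \<in> borel_measurable borel" by (intro dil_meas GS)
  have pw: "dilation L s G t \<le> (\<Sum>k<?N. pc k t)" if t: "0 \<le> t" "t \<le> L" for t
  proof (cases "s * t \<le> L")
    case False
    then have "dilation L s G t = 0" by (simp add: dilation_def)
    then show ?thesis by simp
  next
    case True
    define k where "k = nat \<lfloor>t / c\<rfloor>"
    have tc0: "0 \<le> t / c" using t c0 by simp
    have k1: "real k * c \<le> t" "t < real k * c + c"
    proof -
      have "real k \<le> t / c" "t / c < real k + 1" unfolding k_def using tc0 by linarith+
      then show "real k * c \<le> t" "t < real k * c + c" using c0 by (simp_all add: field_simps)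
    qed
    have tN: "t / c < real ?N"
    proof (cases "1 \<le> x")
      case True
      then have "c = l" by (simp add: c_def)
      moreover have "L / l < real ?N" by linarith
      moreover have "t / l \<le> L / l" using t l0 by (simp add: divide_right_mono)
      ultimately show ?thesis by simp
    next
      case False
      then have cx: "c = l * x" by (simp add: c_def)
      have "t \<le> L * x" using True x unfolding s_def by (simp add: field_simps)
      then have "t / c \<le> L / l" using x l0 cx by (simp add: field_simps)
      moreover have "L / l < real ?N" by linarith
      ultimately show ?thesis by simp
    qed
    have kN: "k < ?N"
    proof -
      have "real k \<le> t / c" unfolding k_def using tc0 by linarith
      then have "real k < real ?N" using tN by linarith
      then show ?thesis by (simp only: of_nat_less_iff)
    qed
    define u where "u = t - real k * c"
    have u: "0 \<le> u" "u < c" using k1 by (simp_all add: u_def)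
    have su: "0 \<le> s * u" "s * u \<le> l"
    proof -
      show "0 \<le> s * u" using s0 u by simp
      have "s * u \<le> s * c" using s0 u by (intro mult_left_mono) auto
      then show "s * u \<le> l" using scl by simp
    qed
    have st: "s * u + s * real k * c = s * t" by (simp add: u_def algebra_simps)
    have "pc k t = G (s * t)"
      unfolding pc_def Fk_def u_def[symmetric] dil_ext gk_def
      using u cl su st by (simp add: ext0_def indicator_def)
    moreover have "dilation L s G t = G (s * t)"
      using True s0 t by (simp add: dilation_def)
    ultimately have "dilation L s G t = pc k t" by simp
    also have "\<dots> \<le> (\<Sum>k<?N. pc k t)" using kN by (intro member_le_sum) auto
    finally show ?thesis .
  qed
  have "RL (dilation L (1/x) g) = RL (dilation L s G)" unfolding s_def[symmetric] dGg ..
  also have "\<dots> \<le> RL (\<lambda>t. \<Sum>k<?N. pc k t)" by (rule RL_mono[OF mS mD pw])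
  also have "\<dots> \<le> (\<Sum>k<?N. RL (pc k))" by (rule RL_sum[OF pcb])
  also have "\<dots> \<le> (\<Sum>k<?N. hl x)" by (intro sum_mono pc_le)
  also have "\<dots> = of_nat ?N * hl x" by simp
  finally show "RL (dilation L (1/x) g) \<le> of_nat ?N * hl x" .
qed

end

lemma Lim_cong_bound:
  fixes f g :: "real \<Rightarrow> real"
  assumes lim: "((\<lambda>x. C / \<bar>ln x\<bar>) \<longlongrightarrow> 0) F"
    and ev: "\<forall>\<^sub>F x in F. \<bar>f x - g x\<bar> \<le> C / \<bar>ln x\<bar>"
  shows "Lim F f = Lim F g"
proof -
  have d: "((\<lambda>x. f x - g x) \<longlongrightarrow> 0) F"
    by (rule Lim_null_comparison[OF _ lim]) (use ev in simp)
  have iff: "(f \<longlongrightarrow> a) F \<longleftrightarrow> (g \<longlongrightarrow> a) F" for a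
  proof
    assume "(f \<longlongrightarrow> a) F"
    from tendsto_diff[OF this d] show "(g \<longlongrightarrow> a) F" by simp
  next
    assume "(g \<longlongrightarrow> a) F"
    from tendsto_add[OF this d] show "(f \<longlongrightarrow> a) F" by simp
  qed
  have "(\<lambda>l. (f \<longlongrightarrow> l) F) = (\<lambda>l. (g \<longlongrightarrow> l) F)" using iff by auto
  then show ?thesis by (simp add: t2_space_class.Lim_def)
qed

lemma lim_at0: "((\<lambda>x::real. C / \<bar>ln x\<bar>) \<longlongrightarrow> 0) (at_right 0)" by real_asymp
lemma lim_top: "((\<lambda>x::real. C / \<bar>ln x\<bar>) \<longlongrightarrow> 0) at_top" by real_asymp

lemma log_ratio_bound:
  fixes a b :: ennreal and N :: nat and x :: real
  assumes ab: "a \<le> b" and ba: "b \<le> of_nat N * a" and N: "1 \<le> N"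
  shows "\<bar>ln (enn2real b) / ln x - ln (enn2real a) / ln x\<bar> \<le> ln (real N) / \<bar>ln x\<bar>"
proof -
  have lnN: "0 \<le> ln (real N)" using N by simp
  have key: "\<bar>ln (enn2real b) - ln (enn2real a)\<bar> \<le> ln (real N)"
  proof (cases "a = 0")
    case True
    then have "b = 0" using ba by simp
    then show ?thesis using True lnN by simp
  next
    case a0: False
    show ?thesis
    proof (cases "a = \<infinity>")
      case True
      then have "b = \<infinity>" using ab by (simp add: top_unique)
      then show ?thesis using True lnN by simp
    next
      case False
      then obtain ra where ra: "a = ennreal ra" "0 < ra" using a0
        by (cases a) (auto simp: ennreal_eq_0_iff)
      have "b \<le> ennreal (real N * ra)" using ba ra by (simp add: ennreal_mult ennreal_of_nat_eq_real_of_nat)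
      define rb where "rb = enn2real b"
      have bt: "b \<noteq> top" using \<open>b \<le> ennreal (real N * ra)\<close> by (auto simp: top_unique)
      have rb: "b = ennreal rb" "0 \<le> rb" unfolding rb_def using bt by (auto simp: ennreal_enn2real_if)
      have rbN: "rb \<le> real N * ra" using \<open>b \<le> ennreal (real N * ra)\<close> rb ra N
        by (simp add: ennreal_le_iff)
      have "ra \<le> rb" using ab ra rb by (simp add: ennreal_le_iff)
      then have rb0: "0 < rb" using ra by simp
      have "ln rb \<le> ln (real N * ra)" using rbN rb0 by simp
      also have "\<dots> = ln (real N) + ln ra" using ra N by (simp add: ln_mult)
      finally have u: "ln rb - ln ra \<le> ln (real N)" by simp
      have l: "ln ra \<le> ln rb" using \<open>ra \<le> rb\<close> ra by simp
      show ?thesis using u l ra rb rb0 by simp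
    qed
  qed
  have "\<bar>ln (enn2real b) / ln x - ln (enn2real a) / ln x\<bar> = \<bar>ln (enn2real b) - ln (enn2real a)\<bar> / \<bar>ln x\<bar>"
    by (simp add: diff_divide_distrib[symmetric] abs_divide)
  also have "\<dots> \<le> ln (real N) / \<bar>ln x\<bar>" using key by (intro divide_right_mono) auto
  finally show ?thesis .
qed

lemma boyd_eq:
  fixes M :: "'a measure" and \<rho> :: "('a \<Rightarrow> ennreal) \<Rightarrow> ennreal"
  assumes fm: "finite_measure M" and na: "nonatomic_measure M"
    and O: "\<Omega> \<in> sets M" and pos: "0 < emeasure M \<Omega>" and ri: "ri_function_norm M \<rho>"
  shows "boyd_lower M \<rho> = boyd_lower (restrict_space M \<Omega>) (restrict_norm \<Omega> \<rho>)"
    "boyd_upper M \<rho> = boyd_upper (restrict_space M \<Omega>) (restrict_norm \<Omega> \<rho>)"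
proof -
  let ?N = "restrict_space M \<Omega>"
  let ?L = "measure M (space M)" and ?l = "measure M \<Omega>"
  let ?RL = "luxemburg_norm M \<rho>"
  note rb = restrict_basic[OF fm na O pos]
  have L: "0 < ?L" using rb by linarith
  have isr: "is_luxemburg_rep M \<rho> ?RL" by (rule lux_norm_eq(1)[OF fm na L ri])
  have riL: "ri_function_norm (restrict_space lborel {0..?L}) ?RL"
    using isr unfolding is_luxemburg_rep_def rep_space_def by simp
  interpret B: boyd_setup ?L ?l ?RL
    by unfold_locales (use rb riL in auto)
  have hM: "boyd_h M \<rho> x = B.hL x" for x unfolding boyd_h_def B.hL_def rep_space_def ..
  have repN: "rep_space ?N = restrict_space lborel {0..?l}" unfolding rep_space_def using rb by simp
  have mN: "measure ?N (space ?N) = ?l" using rb by simp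
  have hN: "boyd_h ?N (restrict_norm \<Omega> \<rho>) x = B.hl x" for x
  proof -
    have lr: "luxemburg_norm ?N (restrict_norm \<Omega> \<rho>) g = ?RL (ext0 ?l g)"
      if "g \<in> borel_measurable (restrict_space lborel {0..?l})" for g
      using lux_rel[OF fm na O pos ri, of g] that repN by simp
    have set_eq: "{g \<in> borel_measurable (restrict_space lborel {0..?l}). luxemburg_norm ?N (restrict_norm \<Omega> \<rho>) g \<le> 1}
        = {g \<in> borel_measurable (restrict_space lborel {0..?l}). ?RL (ext0 ?l g) \<le> 1}"
      using lr by auto
    show ?thesis unfolding boyd_h_def B.hl_def repN mN set_eq
    proof (rule SUP_cong[OF refl])
      fix g assume "g \<in> {g \<in> borel_measurable (restrict_space lborel {0..?l}). ?RL (ext0 ?l g) \<le> 1}"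
      then have g: "g \<in> borel_measurable (restrict_space lborel {0..?l})" by simp
      have "dilation ?l (1 / x) g \<in> borel_measurable (restrict_space lborel {0..?l})"
        by (intro borel_restr dil_meas g)
      then show "luxemburg_norm ?N (restrict_norm \<Omega> \<rho>) (dilation ?l (1 / x) g) =
          ?RL (ext0 ?l (dilation ?l (1 / x) g))" by (rule lr)
    qed
  qed
  define K where "K = nat \<lfloor>?L / ?l\<rfloor> + 1"
  have K1: "1 \<le> K" by (simp add: K_def)
  have bnd: "\<bar>ln (enn2real (boyd_h M \<rho> x)) / ln x - ln (enn2real (boyd_h ?N (restrict_norm \<Omega> \<rho>) x)) / ln x\<bar>
      \<le> ln (real K) / \<bar>ln x\<bar>" if x: "0 < x" for x
    unfolding hM hN
    by (rule log_ratio_bound[OF B.hl_le_hL[OF x] _ K1]) (use B.hL_le[OF x] in \<open>simp add: K_def\<close>)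
  show "boyd_lower M \<rho> = boyd_lower ?N (restrict_norm \<Omega> \<rho>)"
    unfolding boyd_lower_def
  proof (rule Lim_cong_bound[OF lim_at0])
    show "\<forall>\<^sub>F x in at_right 0. \<bar>ln (enn2real (boyd_h M \<rho> x)) / ln x -
        ln (enn2real (boyd_h ?N (restrict_norm \<Omega> \<rho>) x)) / ln x\<bar> \<le> ln (real K) / \<bar>ln x\<bar>"
      unfolding eventually_at_right_field
    proof (intro exI[of _ "1::real"] conjI allI impI)
      fix y :: real assume "0 < y" "y < 1"
      then show "\<bar>ln (enn2real (boyd_h M \<rho> y)) / ln y -
        ln (enn2real (boyd_h ?N (restrict_norm \<Omega> \<rho>) y)) / ln y\<bar> \<le> ln (real K) / \<bar>ln y\<bar>"
        by (intro bnd)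
    qed simp
  qed
  show "boyd_upper M \<rho> = boyd_upper ?N (restrict_norm \<Omega> \<rho>)"
    unfolding boyd_upper_def
  proof (rule Lim_cong_bound[OF lim_top])
    show "\<forall>\<^sub>F x in at_top. \<bar>ln (enn2real (boyd_h M \<rho> x)) / ln x -
        ln (enn2real (boyd_h ?N (restrict_norm \<Omega> \<rho>) x)) / ln x\<bar> \<le> ln (real K) / \<bar>ln x\<bar>"
      using eventually_gt_at_top[of "0::real"] by eventually_elim (rule bnd)
  qed
qed

theorem lemma2p3:
  fixes M :: "'a measure" and \<Omega> :: "'a set" and \<rho> :: "('a \<Rightarrow> ennreal) \<Rightarrow> ennreal"
  assumes "finite_measure M"
    and "nonatomic_measure M"
    and "separable_measure M"
    and "\<Omega> \<in> sets M"
    and "emeasure M \<Omega> > 0"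
    and "ri_function_norm M \<rho>"
  shows "ri_function_norm (restrict_space M \<Omega>) (restrict_norm \<Omega> \<rho>) \<and>
         boyd_lower M \<rho> = boyd_lower (restrict_space M \<Omega>) (restrict_norm \<Omega> \<rho>) \<and>
         boyd_upper M \<rho> = boyd_upper (restrict_space M \<Omega>) (restrict_norm \<Omega> \<rho>) \<and>
         zippin_lower M \<rho> = zippin_lower (restrict_space M \<Omega>) (restrict_norm \<Omega> \<rho>) \<and>
         zippin_upper M \<rho> = zippin_upper (restrict_space M \<Omega>) (restrict_norm \<Omega> \<rho>)"
  using restrict_ri[OF assms(4,6)] boyd_eq[OF assms(1,2,4,5,6)] zippin_eq[OF assms(1,2,4,5,6)]
  by blast

end
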